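(* Let $X$ be a compact Hausdorff space, $\mathcal C = C(X)$ the algebra of continuous real-valued functions on $X$ with the supremum norm, $\alpha\colon X\to X$ a continuous map, $\delta\colon \mathcal C\to\mathcal C$ the endomorphism $\delta f = f\circ\alpha$, and $A\colon \mathcal C\to\mathcal C$ a transfer operator for $(\mathcal C,\delta)$. For $\varphi\in\mathcal C$ let $A_\varphi f = A(e^\varphi f)$ and let $\lambda(\varphi)=\lim_{n\to\infty}\frac1n\ln\|A_\varphi^n\mathbf 1\|$ be the spectral potential. Then for every $\mu\in M_\delta(\mathcal C)$, \[ \tau(\mu)=\inf_{\varphi\in\mathcal C}\bigl(\lambda(\varphi)-\mu[\varphi]\bigr), \] where $\tau$ is the $t$-entropy.
   Context: A transfer operator for $(\mathcal C,\delta)$ is a linear operator $A\colon\mathcal C\to\mathcal C$ that is positive (maps nonnegative functions to nonnegative functions) and satisfies the homological identity $A((\delta f)g)=f\,Ag$ for all $f,g\in\mathcal C$. $\mathbf 1$ denotes the constant function $1$. $M(\mathcal C)$ is the set of positive linear functionals $m$ on $\mathcal C$ with $m[\mathbf 1]=1$ (identified with regular Borel probability measures on $X$), and $M_\delta(\mathcal C)=\{\mu\in M(\mathcal C): \mu[\delta f]=\mu[f]\ \forall f\in\mathcal C\}$. A partition of unity is a finite set $D=\{g_1,\dots,g_k\}$ of nonnegative elements of $\mathcal C$ with $g_1+\dots+g_k=\mathbf 1$. For $\mu\in M_\delta(\mathcal C)$, $n\in\mathbb N$ and a partition of unity $D$ put \[ \tau_n(\mu,D)=\sup_{m\in M(\mathcal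 C)}\sum_{g\in D}\mu[g]\ln\frac{m[A^ng]}{\mu[g]},\qquad \tau_n(\mu)=\inf_D\tau_n(\mu,D),\qquad \tau(\mu)=\inf_{n\in\mathbb N}\frac{\tau_n(\mu)}{n}, \] the infimum over $D$ ranging over all partitions of unity; a summand with $\mu[g]=0$ is set to $0$ regardless of $m[A^ng]$, $\ln 0=-\infty$, and if some $g\in D$ has $A^ng=0$ and $\mu[g]>0$ then $\tau(\mu)=-\infty$. $\tau(\mu)$ is called the $t$-entropy. *)

theory Defs
  imports "HOL-Analysis.Analysis" "HOL-Library.Extended_Real"
begin

text \<open>The algebra C(X) of continuous real functions on the (compact Hausdorff) space X,
  here X is the whole type 'a.\<close>
definition CX :: "('a::topological_space \<Rightarrow> real) set" where
  "CX = {f. continuous_on UNIV f}"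

definition supnorm :: "('a \<Rightarrow> real) \<Rightarrow> real" where
  "supnorm f = (SUP x. \<bar>f x\<bar>)"

definition eln :: "real \<Rightarrow> ereal" where
  "eln x = (if x > 0 then ereal (ln x) else -\<infinity>)"

definition linear_on_CX :: "(('a::topological_space \<Rightarrow> real) \<Rightarrow> ('a \<Rightarrow> real)) \<Rightarrow> bool" where
  "linear_on_CX A \<longleftrightarrow> (\<forall>f\<in>CX. A f \<in> CX) \<and>
     (\<forall>f\<in>CX. \<forall>g\<in>CX. A (\<lambda>x. f x + g x) = (\<lambda>x. A f x + A g x)) \<and>
     (\<forall>f\<in>CX. \<forall>c::real. A (\<lambda>x. c * f x) = (\<lambda>x. c * A f x))"

definition transfer_operator ::
  "('a::topological_space \<Rightarrow> 'a) \<Rightarrow> (('a \<Rightarrow> real) \<Rightarrow> ('a \<Rightarrow> real)) \<Rightarrow> bool" where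
  "transfer_operator \<alpha> A \<longleftrightarrow> linear_on_CX A \<and>
     (\<forall>f\<in>CX. (\<forall>x. f x \<ge> 0) \<longrightarrow> (\<forall>x. A f x \<ge> 0)) \<and>
     (\<forall>f\<in>CX. \<forall>g\<in>CX. A (\<lambda>x. f (\<alpha> x) * g x) = (\<lambda>x. f x * A g x))"

definition states :: "(('a::topological_space \<Rightarrow> real) \<Rightarrow> real) set" where
  "states = {m. (\<forall>f\<in>CX. \<forall>g\<in>CX. m (\<lambda>x. f x + g x) = m f + m g) \<and>
                (\<forall>f\<in>CX. \<forall>c::real. m (\<lambda>x. c * f x) = c * m f) \<and>
                (\<forall>f\<in>CX. (\<forall>x. f x \<ge> 0) \<longrightarrow> m f \<ge> 0) \<and>
                m (\<lambda>x. 1) = 1}"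

definition inv_states :: "('a::topological_space \<Rightarrow> 'a) \<Rightarrow> (('a \<Rightarrow> real) \<Rightarrow> real) set" where
  "inv_states \<alpha> = {\<mu>\<in>states. \<forall>f\<in>CX. \<mu> (\<lambda>x. f (\<alpha> x)) = \<mu> f}"

definition partition_of_unity :: "('a::topological_space \<Rightarrow> real) set \<Rightarrow> bool" where
  "partition_of_unity D \<longleftrightarrow> finite D \<and> D \<subseteq> CX \<and> (\<forall>g\<in>D. \<forall>x. g x \<ge> 0) \<and>
     (\<forall>x. (\<Sum>g\<in>D. g x) = 1)"

definition tau_nD ::
  "(('a::topological_space \<Rightarrow> real) \<Rightarrow> ('a \<Rightarrow> real)) \<Rightarrow> (('a \<Rightarrow> real) \<Rightarrow> real) \<Rightarrow> nat
     \<Rightarrow> ('a \<Rightarrow> real) set \<Rightarrow> ereal" where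
  "tau_nD A \<mu> n D = (SUP m\<in>states. \<Sum>g\<in>D.
      (if \<mu> g = 0 then 0 else ereal (\<mu> g) * eln (m ((A ^^ n) g) / \<mu> g)))"

definition tau_n ::
  "(('a::topological_space \<Rightarrow> real) \<Rightarrow> ('a \<Rightarrow> real)) \<Rightarrow> (('a \<Rightarrow> real) \<Rightarrow> real) \<Rightarrow> nat \<Rightarrow> ereal" where
  "tau_n A \<mu> n = (INF D\<in>{D. partition_of_unity D}. tau_nD A \<mu> n D)"

definition t_entropy ::
  "(('a::topological_space \<Rightarrow> real) \<Rightarrow> ('a \<Rightarrow> real)) \<Rightarrow> (('a \<Rightarrow> real) \<Rightarrow> real) \<Rightarrow> ereal" where
  "t_entropy A \<mu> = (INF n\<in>{1..}. tau_n A \<mu> n / ereal (real n))"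

definition weighted_op ::
  "(('a \<Rightarrow> real) \<Rightarrow> ('a \<Rightarrow> real)) \<Rightarrow> ('a \<Rightarrow> real) \<Rightarrow> ('a \<Rightarrow> real) \<Rightarrow> ('a \<Rightarrow> real)" where
  "weighted_op A \<phi> f = A (\<lambda>x. exp (\<phi> x) * f x)"

definition spectral_potential ::
  "(('a \<Rightarrow> real) \<Rightarrow> ('a \<Rightarrow> real)) \<Rightarrow> ('a \<Rightarrow> real) \<Rightarrow> ereal" where
  "spectral_potential A \<phi> =
     lim (\<lambda>n. eln (supnorm ((weighted_op A \<phi> ^^ n) (\<lambda>x. 1))) / ereal (real n))"

end

theory Submission
  imports Defs
begin


lemma CX_iff: "f \<in> CX \<longleftrightarrow> continuous_on UNIV f"
  by (simp add: CX_def)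

lemma CX_const[intro]: "(\<lambda>x. c) \<in> CX"
  by (simp add: CX_iff)

lemma CX_add[intro]: "f \<in> CX \<Longrightarrow> g \<in> CX \<Longrightarrow> (\<lambda>x. f x + g x) \<in> CX"
  by (auto simp: CX_iff intro!: continuous_intros)

lemma CX_diff[intro]: "f \<in> CX \<Longrightarrow> g \<in> CX \<Longrightarrow> (\<lambda>x. f x - g x) \<in> CX"
  by (auto simp: CX_iff intro!: continuous_intros)

lemma CX_uminus[intro]: "f \<in> CX \<Longrightarrow> (\<lambda>x. - f x) \<in> CX"
  by (auto simp: CX_iff intro!: continuous_intros)

lemma CX_mult[intro]: "f \<in> CX \<Longrightarrow> g \<in> CX \<Longrightarrow> (\<lambda>x. f x * g x) \<in> CX"
  by (auto simp: CX_iff intro!: continuous_intros)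

lemma CX_scale[intro]: "f \<in> CX \<Longrightarrow> (\<lambda>x. c * f x) \<in> CX"
  by (auto simp: CX_iff intro!: continuous_intros)

lemma CX_divc[intro]: "f \<in> CX \<Longrightarrow> (\<lambda>x. f x / c) \<in> CX"
  using CX_scale[of f "1/c"] by simp

lemma CX_exp[intro]: "f \<in> CX \<Longrightarrow> (\<lambda>x. exp (f x)) \<in> CX"
  by (auto simp: CX_iff intro!: continuous_intros)

lemma CX_ln[intro]: "f \<in> CX \<Longrightarrow> (\<And>x. f x > 0) \<Longrightarrow> (\<lambda>x. ln (f x)) \<in> CX"
proof -
  assume a: "f \<in> CX" "\<And>x. f x > 0"
  then have "\<forall>x. f x \<noteq> 0" by (metis less_irrefl)
  then show ?thesis using a by (auto simp: CX_iff intro!: continuous_intros)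
qed

lemma CX_min[intro]: "f \<in> CX \<Longrightarrow> g \<in> CX \<Longrightarrow> (\<lambda>x. min (f x) (g x)) \<in> CX"
  by (auto simp: CX_iff intro!: continuous_intros)

lemma CX_max[intro]: "f \<in> CX \<Longrightarrow> g \<in> CX \<Longrightarrow> (\<lambda>x. max (f x) (g x)) \<in> CX"
  by (auto simp: CX_iff intro!: continuous_intros)

lemma CX_sum[intro]: "(\<And>i. i \<in> I \<Longrightarrow> f i \<in> CX) \<Longrightarrow> (\<lambda>x. \<Sum>i\<in>I. f i x) \<in> CX"
  unfolding CX_iff by (intro continuous_intros) auto

lemma CX_comp_cont[intro]: "f \<in> CX \<Longrightarrow> continuous_on UNIV (h::'a::topological_space \<Rightarrow> 'a) \<Longrightarrow> (\<lambda>x. f (h x)) \<in> CX"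
  unfolding CX_iff by (rule continuous_on_compose2[of UNIV f UNIV h]) auto

lemma CX_comp_real[intro]: "f \<in> CX \<Longrightarrow> continuous_on UNIV (h::real \<Rightarrow> real) \<Longrightarrow> (\<lambda>x. h (f x)) \<in> CX"
  unfolding CX_iff by (rule continuous_on_compose2[of UNIV h UNIV f]) auto

lemma cont_funpow: "continuous_on UNIV (\<alpha>::'a::topological_space \<Rightarrow> 'a) \<Longrightarrow> continuous_on UNIV (\<alpha>^^n)"
proof (induction n)
  case 0 then show ?case by (simp add: continuous_on_id)
next
  case (Suc n)
  then show ?case
    by (simp del: funpow.simps add: funpow_Suc_right o_def)
       (rule continuous_on_compose2[of UNIV "\<alpha>^^n" UNIV \<alpha>], auto)
qed

lemma CX_bounded:
  fixes f :: "'a::topological_space \<Rightarrow> real"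
  assumes "compact (UNIV::'a::topological_space set)" "f \<in> CX"
  shows "\<exists>B. \<forall>x. \<bar>f x\<bar> \<le> B"
proof -
  have "compact (f ` UNIV)" by (metis CX_iff assms compact_continuous_image)
  then have "bounded (f ` UNIV)" by (rule compact_imp_bounded)
  then show ?thesis by (auto simp: bounded_real)
qed

lemma supnorm_ge:
  fixes f :: "'a::topological_space \<Rightarrow> real"
  assumes "compact (UNIV::'a::topological_space set)" "f \<in> CX"
  shows "\<bar>f x\<bar> \<le> supnorm f"
proof -
  obtain B where "\<forall>x. \<bar>f x\<bar> \<le> B" using CX_bounded[OF assms] by auto
  then have "bdd_above (range (\<lambda>x. \<bar>f x\<bar>))" by (auto intro: bdd_aboveI)
  then show ?thesis unfolding supnorm_def using cSUP_upper[of x UNIV "\<lambda>x. \<bar>f x\<bar>"] by auto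
qed

lemma supnorm_ge':
  fixes f :: "'a::topological_space \<Rightarrow> real"
  assumes "compact (UNIV::'a::topological_space set)" "f \<in> CX"
  shows "f x \<le> supnorm f"
  using supnorm_ge[OF assms, of x] by linarith

lemma supnorm_nonneg:
  fixes f :: "'a::topological_space \<Rightarrow> real"
  assumes "compact (UNIV::'a::topological_space set)" "f \<in> CX"
  shows "0 \<le> supnorm f"
  using supnorm_ge[OF assms, of undefined] by linarith

lemma supnorm_le: "(\<And>x. \<bar>f x\<bar> \<le> c) \<Longrightarrow> supnorm f \<le> c"
  unfolding supnorm_def by (rule cSUP_least) auto

lemma supnorm_le_pos: "(\<And>x. 0 \<le> f x) \<Longrightarrow> (\<And>x. f x \<le> c) \<Longrightarrow> supnorm f \<le> c"
  by (rule supnorm_le) (metis abs_of_nonneg)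

lemma supnorm_const1: "supnorm (\<lambda>x. 1) = 1"
  unfolding supnorm_def by simp

lemma supnorm_zero_iff:
  fixes f :: "'a::topological_space \<Rightarrow> real"
  assumes "compact (UNIV::'a::topological_space set)" "f \<in> CX"
  shows "supnorm f = 0 \<longleftrightarrow> (\<forall>x. f x = 0)"
proof
  assume "supnorm f = 0" then show "\<forall>x. f x = 0" using supnorm_ge[OF assms] by (metis abs_le_zero_iff)
next
  assume "\<forall>x. f x = 0" then show "supnorm f = 0" unfolding supnorm_def by simp
qed

definition poslin :: "(('a::topological_space \<Rightarrow> real) \<Rightarrow> ('a \<Rightarrow> real)) \<Rightarrow> bool" where
  "poslin T \<longleftrightarrow> linear_on_CX T \<and> (\<forall>f\<in>CX. (\<forall>x. f x \<ge> 0) \<longrightarrow> (\<forall>x. T f x \<ge> 0))"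

lemma poslin_CX: "poslin T \<Longrightarrow> f \<in> CX \<Longrightarrow> T f \<in> CX"
  by (auto simp: poslin_def linear_on_CX_def)

lemma poslin_add: "poslin T \<Longrightarrow> f \<in> CX \<Longrightarrow> g \<in> CX \<Longrightarrow> T (\<lambda>x. f x + g x) = (\<lambda>x. T f x + T g x)"
  by (auto simp: poslin_def linear_on_CX_def)

lemma poslin_scale: "poslin T \<Longrightarrow> f \<in> CX \<Longrightarrow> T (\<lambda>x. c * f x) = (\<lambda>x. c * T f x)"
  by (auto simp: poslin_def linear_on_CX_def)

lemma poslin_pos: "poslin T \<Longrightarrow> f \<in> CX \<Longrightarrow> (\<And>x. f x \<ge> 0) \<Longrightarrow> T f x \<ge> 0"
  by (auto simp: poslin_def)

lemma poslin_zero: "poslin T \<Longrightarrow> T (\<lambda>x. 0) = (\<lambda>x. 0)"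
  using poslin_scale[of T "\<lambda>x. 0" 0] by auto

lemma poslin_diff: "poslin T \<Longrightarrow> f \<in> CX \<Longrightarrow> g \<in> CX \<Longrightarrow> T (\<lambda>x. f x - g x) = (\<lambda>x. T f x - T g x)"
proof -
  assume T: "poslin T" and f: "f \<in> CX" and g: "g \<in> CX"
  have "T (\<lambda>x. f x - g x) = T (\<lambda>x. f x + (\<lambda>x. (-1) * g x) x)" by simp
  also have "\<dots> = (\<lambda>x. T f x + T (\<lambda>x. (-1) * g x) x)"
    using T f g by (intro poslin_add) auto
  also have "\<dots> = (\<lambda>x. T f x - T g x)" using poslin_scale[OF T g, of "-1"] by simp
  finally show ?thesis .
qed

lemma poslin_mono: "poslin T \<Longrightarrow> f \<in> CX \<Longrightarrow> g \<in> CX \<Longrightarrow> (\<And>x. f x \<le> g x) \<Longrightarrow> T f x \<le> T g x"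
  using poslin_pos[of T "\<lambda>x. g x - f x" x] poslin_diff[of T g f] by auto

lemma poslin_sum:
  assumes "poslin T" "finite I" "\<And>i. i \<in> I \<Longrightarrow> f i \<in> CX"
  shows "T (\<lambda>x. \<Sum>i\<in>I. f i x) = (\<lambda>x. \<Sum>i\<in>I. T (f i) x)"
  using assms(2,3)
proof (induction I rule: finite_induct)
  case empty then show ?case by (simp add: poslin_zero[OF assms(1)])
next
  case (insert a I)
  then show ?case by (simp add: poslin_add[OF assms(1)] CX_sum)
qed

lemma poslin_const: "poslin T \<Longrightarrow> T (\<lambda>x. c) = (\<lambda>x. c * T (\<lambda>x. 1) x)"
  using poslin_scale[of T "\<lambda>x. 1" c] by auto

lemma poslin_comp: "poslin T \<Longrightarrow> poslin U \<Longrightarrow> poslin (T \<circ> U)"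
  unfolding poslin_def linear_on_CX_def by (auto simp: o_def)

lemma poslin_id: "poslin (\<lambda>f. f)"
  unfolding poslin_def linear_on_CX_def by auto

lemma poslin_funpow: "poslin T \<Longrightarrow> poslin (T ^^ n)"
  by (induction n) (auto simp: poslin_id id_def poslin_comp)

lemma transfer_poslin: "transfer_operator \<alpha> A \<Longrightarrow> poslin A"
  by (simp add: transfer_operator_def poslin_def)

lemma poslin_le_norm:
  fixes f :: "'a::topological_space \<Rightarrow> real"
  assumes "compact (UNIV::'a::topological_space set)" "poslin T" "f \<in> CX"
  shows "T f x \<le> supnorm f * T (\<lambda>x. 1) x"
proof -
  have "T f x \<le> T (\<lambda>x. supnorm f) x"
    using poslin_mono[OF assms(2,3) CX_const supnorm_ge'[OF assms(1,3)]] .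
  then show ?thesis using poslin_scale[OF assms(2) CX_const[of 1], of "supnorm f"] by simp
qed

lemma poslin_weighted:
  assumes "poslin T" "\<phi> \<in> CX"
  shows "poslin (\<lambda>f. T (\<lambda>x. exp (\<phi> x) * f x))"
proof -
  have pos: "0 \<le> T (\<lambda>x. exp (\<phi> x) * f x) x" if "f \<in> CX" "\<forall>x. 0 \<le> f x" for f x
  proof (rule poslin_pos[OF assms(1)])
    show "(\<lambda>x. exp (\<phi> x) * f x) \<in> CX" using that assms by auto
    show "0 \<le> exp (\<phi> x) * f x" for x using that by simp
  qed
  have add: "T (\<lambda>x. exp (\<phi> x) * (f x + g x)) = (\<lambda>x. T (\<lambda>x. exp (\<phi> x) * f x) x + T (\<lambda>x. exp (\<phi> x) * g x) x)"
    if "f \<in> CX" "g \<in> CX" for f g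
  proof -
    have "T (\<lambda>x. exp (\<phi> x) * (f x + g x)) = T (\<lambda>x. exp (\<phi> x) * f x + exp (\<phi> x) * g x)"
      by (simp add: distrib_left)
    also have "\<dots> = (\<lambda>x. T (\<lambda>x. exp (\<phi> x) * f x) x + T (\<lambda>x. exp (\<phi> x) * g x) x)"
      using that assms by (intro poslin_add) auto
    finally show ?thesis .
  qed
  have sc: "T (\<lambda>x. exp (\<phi> x) * (c * f x)) = (\<lambda>x. c * T (\<lambda>x. exp (\<phi> x) * f x) x)"
    if "f \<in> CX" for f c
  proof -
    have "T (\<lambda>x. exp (\<phi> x) * (c * f x)) = T (\<lambda>x. c * (exp (\<phi> x) * f x))"
      by (simp add: mult.left_commute)
    also have "\<dots> = (\<lambda>x. c * T (\<lambda>x. exp (\<phi> x) * f x) x)"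
      using that assms by (intro poslin_scale) auto
    finally show ?thesis .
  qed
  have cx: "T (\<lambda>x. exp (\<phi> x) * f x) \<in> CX" if "f \<in> CX" for f
    by (rule poslin_CX[OF assms(1)]) (use that assms in auto)
  show ?thesis
    unfolding poslin_def linear_on_CX_def using pos add sc cx by blast
qed

lemma homological_funpow:
  assumes "transfer_operator \<alpha> A" "continuous_on UNIV \<alpha>"
  shows "f \<in> CX \<Longrightarrow> g \<in> CX \<Longrightarrow> (A^^n) (\<lambda>x. f ((\<alpha>^^n) x) * g x) = (\<lambda>x. f x * (A^^n) g x)"
proof (induction n arbitrary: f)
  case 0 then show ?case by simp
next
  case (Suc n)
  have PA: "poslin A" using transfer_poslin[OF assms(1)] .
  have fa: "(\<lambda>x. f (\<alpha> x)) \<in> CX" using Suc assms by auto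
  have "(A^^Suc n) (\<lambda>x. f ((\<alpha>^^Suc n) x) * g x) = A ((A^^n) (\<lambda>x. (\<lambda>x. f (\<alpha> x)) ((\<alpha>^^n) x) * g x))"
    by simp
  also have "\<dots> = A (\<lambda>x. f (\<alpha> x) * (A^^n) g x)" using Suc.IH[OF fa Suc.prems(2)] by simp
  also have "\<dots> = (\<lambda>x. f x * A ((A^^n) g) x)"
    using assms(1) Suc.prems poslin_CX[OF poslin_funpow[OF PA]]
    by (auto simp: transfer_operator_def)
  finally show ?case by simp
qed

lemma states_add: "m \<in> states \<Longrightarrow> f \<in> CX \<Longrightarrow> g \<in> CX \<Longrightarrow> m (\<lambda>x. f x + g x) = m f + m g"
  by (auto simp: states_def)
lemma states_scale: "m \<in> states \<Longrightarrow> f \<in> CX \<Longrightarrow> m (\<lambda>x. c * f x) = c * m f"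
  by (auto simp: states_def)
lemma states_pos: "m \<in> states \<Longrightarrow> f \<in> CX \<Longrightarrow> (\<And>x. f x \<ge> 0) \<Longrightarrow> m f \<ge> 0"
  by (auto simp: states_def)
lemma states_one: "m \<in> states \<Longrightarrow> m (\<lambda>x. 1) = 1"
  by (auto simp: states_def)

lemma states_const: "m \<in> states \<Longrightarrow> m (\<lambda>x. c) = c"
  using states_scale[of m "\<lambda>x. 1" c] states_one[of m] by auto

lemma states_diff: "m \<in> states \<Longrightarrow> f \<in> CX \<Longrightarrow> g \<in> CX \<Longrightarrow> m (\<lambda>x. f x - g x) = m f - m g"
proof -
  assume m: "m \<in> states" and f: "f \<in> CX" and g: "g \<in> CX"
  have "m (\<lambda>x. f x - g x) = m (\<lambda>x. f x + (\<lambda>x. (-1) * g x) x)" by simp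
  also have "\<dots> = m f + m (\<lambda>x. (-1) * g x)" using m f g by (intro states_add) auto
  also have "\<dots> = m f - m g" using states_scale[OF m g, of "-1"] by simp
  finally show ?thesis .
qed

lemma states_mono: "m \<in> states \<Longrightarrow> f \<in> CX \<Longrightarrow> g \<in> CX \<Longrightarrow> (\<And>x. f x \<le> g x) \<Longrightarrow> m f \<le> m g"
  using states_pos[of m "\<lambda>x. g x - f x"] states_diff[of m g f] by auto

lemma states_sum:
  assumes "m \<in> states" "finite I" "\<And>i. i \<in> I \<Longrightarrow> f i \<in> CX"
  shows "m (\<lambda>x. \<Sum>i\<in>I. f i x) = (\<Sum>i\<in>I. m (f i))"
  using assms(2,3)
proof (induction I rule: finite_induct)
  case empty then show ?case using states_const[OF assms(1), of 0] by simp
next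
  case (insert a I)
  then show ?case by (simp add: states_add[OF assms(1)] CX_sum)
qed

lemma states_le_norm: "compact (UNIV::'a::topological_space set) \<Longrightarrow> m \<in> states \<Longrightarrow> (f::'a \<Rightarrow> real) \<in> CX \<Longrightarrow> m f \<le> supnorm f"
  using states_mono[of m f "\<lambda>x. supnorm f"] states_const[of m "supnorm f"] supnorm_ge' by auto

lemma eval_states: "(\<lambda>f. f x) \<in> states"
  by (auto simp: states_def)

lemma convex_states: "m1 \<in> states \<Longrightarrow> m2 \<in> states \<Longrightarrow> 0 \<le> t \<Longrightarrow> t \<le> 1 \<Longrightarrow>
   (\<lambda>f. (1 - t) * m1 f + t * m2 f) \<in> states"
proof -
  assume a: "m1 \<in> states" "m2 \<in> states" "0 \<le> t" "t \<le> 1"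
  have pos: "0 \<le> (1 - t) * m1 f + t * m2 f" if "f \<in> CX" "\<forall>x. 0 \<le> f x" for f
    using a that states_pos[of m1 f] states_pos[of m2 f] by simp
  show ?thesis using a pos unfolding states_def by (auto simp: algebra_simps)
qed

lemma avg_states:
  assumes "finite I" "I \<noteq> {}"
  shows "(\<lambda>f. (\<Sum>i\<in>I. f (p i)) / card I) \<in> states"
  using assms unfolding states_def
  by (auto simp: sum.distrib sum_distrib_left add_divide_distrib intro!: divide_nonneg_nonneg sum_nonneg)

lemma states_nonempty: "states \<noteq> {}"
  using eval_states by blast



lemma eln_pos: "x > 0 \<Longrightarrow> eln x = ereal (ln x)"
  by (simp add: eln_def)
lemma eln_nonpos: "x \<le> 0 \<Longrightarrow> eln x = -\<infinity>"
  by (simp add: eln_def)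
lemma eln_not_inf[simp]: "eln x \<noteq> \<infinity>"
  by (simp add: eln_def)
lemma eln_mono: "x \<le> y \<Longrightarrow> eln x \<le> eln y"
  by (auto simp: eln_def)
lemma eln_mult: "0 \<le> x \<Longrightarrow> 0 \<le> y \<Longrightarrow> eln (x * y) = eln x + eln y"
  by (auto simp: eln_def ln_mult zero_less_mult_iff)
lemma eln_one[simp]: "eln 1 = 0"
  by (simp add: eln_def)

section \<open>Fekete\<close>

lemma fekete_real_bound:
  fixes b :: "nat \<Rightarrow> real"
  assumes sub: "\<And>n m. b (n + m) \<le> b n + b m" and m: "m \<ge> 1"
  shows "\<exists>C. \<forall>n\<ge>1. b n / n \<le> b m / m + C / n"
proof -
  have qb: "b (q * m + r) \<le> q * b m + b r" for q r
  proof (induction q)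
    case 0 then show ?case by simp
  next
    case (Suc q)
    have "b (Suc q * m + r) = b (m + (q * m + r))" by (simp add: algebra_simps)
    also have "\<dots> \<le> b m + b (q * m + r)" by (rule sub)
    also have "\<dots> \<le> Suc q * b m + b r" using Suc by (simp add: algebra_simps)
    finally show ?case .
  qed
  define R where "R = Max ((\<lambda>r. \<bar>b r\<bar>) ` {..<m})"
  have R: "\<bar>b r\<bar> \<le> R" if "r < m" for r
    unfolding R_def using that by (intro Max_ge) auto
  define C where "C = \<bar>b m\<bar> + R"
  have "b n / n \<le> b m / m + C / n" if n: "n \<ge> 1" for n
  proof -
    define q where "q = n div m"
    define r where "r = n mod m"
    have nqr: "n = q * m + r" unfolding q_def r_def by simp
    have rm: "r < m" unfolding r_def using m by simp
    have mpos: "(0::real) < m" using m by simp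
    have "real n = real q * m + r" using nqr by simp
    then have q1: "real q * m \<le> n" and q2: "real n - m \<le> real q * m" using rm by auto
    have bq: "b n \<le> q * b m + R" using qb[of q r] R[OF rm] nqr by simp
    have "real q * b m \<le> n * b m / m + \<bar>b m\<bar>"
    proof (cases "b m \<ge> 0")
      case True
      have "real q \<le> n / m" using q1 mpos by (simp add: field_simps)
      then have "real q * b m \<le> n / m * b m" using True by (rule mult_right_mono)
      then show ?thesis by simp
    next
      case False
      have "n / m - 1 \<le> real q" using q2 mpos by (simp add: field_simps)
      then have "real q * b m \<le> (n / m - 1) * b m" using False by (intro mult_right_mono_neg) auto
      then show ?thesis using False by (simp add: algebra_simps)
    qed
    then have "b n \<le> n * b m / m + C" using bq unfolding C_def by simp
    then have "b n / n \<le> (n * b m / m + C) / n" using n by (intro divide_right_mono) auto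
    also have "\<dots> = b m / m + C / n" using n by (simp add: field_simps)
    finally show ?thesis .
  qed
  then show ?thesis by blast
qed

lemma fekete_ereal:
  fixes a :: "nat \<Rightarrow> ereal"
  assumes fin: "\<And>n. a n \<noteq> \<infinity>" and sub: "\<And>n m. a (n + m) \<le> a n + a m"
  shows "(\<lambda>n. a n / ereal (real n)) \<longlonglongrightarrow> (INF n\<in>{1..}. a n / ereal (real n))"
proof (rule order_tendstoI)
  let ?L = "INF n\<in>{1..}. a n / ereal (real n)"
  fix y assume "y < ?L"
  then show "\<forall>\<^sub>F n in sequentially. y < a n / ereal (real n)"
    unfolding eventually_sequentially
    by (intro exI[of _ 1] allI impI) (auto intro: less_le_trans INF_lower)
next
  let ?L = "INF n\<in>{1..}. a n / ereal (real n)"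
  fix y assume y: "?L < y"
  then obtain m where m: "m \<ge> 1" "a m / ereal (real m) < y"
    by (auto simp: INF_less_iff)
  have yninf: "y \<noteq> -\<infinity>" using y by auto
  have minf_case: "\<forall>\<^sub>F n in sequentially. a n / ereal (real n) < y" if k: "k \<ge> 1" "a k = -\<infinity>" for k
  proof -
    have "a n = -\<infinity>" if "n \<ge> k" for n
    proof -
      have "a n = a (k + (n - k))" using that by simp
      also have "\<dots> \<le> a k + a (n - k)" by (rule sub)
      also have "\<dots> = -\<infinity>" using k fin[of "n-k"] by simp
      finally show ?thesis by simp
    qed
    then show ?thesis unfolding eventually_sequentially using yninf k
      by (intro exI[of _ k]) (auto simp: ereal_divide less_le)
  qed
  show "\<forall>\<^sub>F n in sequentially. a n / ereal (real n) < y"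
  proof (cases "\<exists>k\<ge>1. a k = -\<infinity>")
    case True then show ?thesis using minf_case by blast
  next
    case False
    have a0: "a 0 \<noteq> -\<infinity>"
    proof
      assume "a 0 = -\<infinity>"
      then have "a 1 \<le> a 1 + a 0" using sub[of 1 0] by simp
      then have "a 1 = -\<infinity>" using \<open>a 0 = -\<infinity>\<close> fin[of 1] by (cases "a 1") auto
      then show False using False by auto
    qed
    have finite_all: "\<bar>a n\<bar> \<noteq> \<infinity>" for n
      using False a0 fin[of n] by (cases n) auto
    define b where "b n = real_of_ereal (a n)" for n
    have ab: "a n = ereal (b n)" for n using finite_all[of n] unfolding b_def by (cases "a n") auto
    have subb: "b (n + m) \<le> b n + b m" for n m using sub[of n m] by (simp add: ab)
    obtain C where C: "\<forall>n\<ge>1. b n / n \<le> b m / m + C / n" using fekete_real_bound[OF subb m(1)] by blast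
    have div: "a n / ereal (real n) = ereal (b n / n)" if "n \<ge> 1" for n using that by (simp add: ab ereal_divide)
    show ?thesis
    proof (cases y)
      case PInf
      then show ?thesis unfolding eventually_sequentially
        by (intro exI[of _ 1]) (auto simp: div)
    next
      case MInf then show ?thesis using yninf by simp
    next
      case (real Y)
      have bY: "b m / m < Y" using m div[OF m(1)] real by simp
      define N where "N = nat (ceiling (\<bar>C\<bar> / (Y - b m / m))) + 1"
      have "\<bar>C\<bar> / (Y - b m / m) < N" unfolding N_def by linarith
      then have CN: "\<bar>C\<bar> < N * (Y - b m / m)" using bY by (simp add: field_simps)
      have "b n / n < Y" if n: "n \<ge> N" for n
      proof -
        have n1: "n \<ge> 1" using n unfolding N_def by simp
        have "\<bar>C\<bar> < n * (Y - b m / m)" using CN n bY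
          by (meson less_le_trans mult_right_mono of_nat_mono less_imp_le diff_gt_0_iff_gt)
        then have "C / n < Y - b m / m" using n1 by (simp add: field_simps)
        then show ?thesis using C n1 by force
      qed
      then show ?thesis unfolding eventually_sequentially using real
        by (intro exI[of _ N]) (auto simp: div N_def)
    qed
  qed
qed



locale sys =
  fixes \<alpha> :: "'a::t2_space \<Rightarrow> 'a" and A :: "('a \<Rightarrow> real) \<Rightarrow> ('a \<Rightarrow> real)"
  assumes cpt: "compact (UNIV::'a set)" and cont\<alpha>: "continuous_on UNIV \<alpha>"
    and tr: "transfer_operator \<alpha> A"
begin

lemma PA: "poslin A" using transfer_poslin[OF tr] .
lemma PAn: "poslin (A^^n)" using poslin_funpow[OF PA] .

lemma CX_alpha[intro]: "f \<in> CX \<Longrightarrow> (\<lambda>x. f ((\<alpha>^^n) x)) \<in> CX"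
  using cont_funpow[OF cont\<alpha>] by (rule CX_comp_cont[rotated])

lemma An_CX[intro]: "f \<in> CX \<Longrightarrow> (A^^n) f \<in> CX"
  using poslin_CX[OF PAn] .

lemma hom: "f \<in> CX \<Longrightarrow> g \<in> CX \<Longrightarrow> (A^^n) (\<lambda>x. f ((\<alpha>^^n) x) * g x) = (\<lambda>x. f x * (A^^n) g x)"
  using homological_funpow[OF tr cont\<alpha>] .

definition Sn :: "('a \<Rightarrow> real) \<Rightarrow> nat \<Rightarrow> 'a \<Rightarrow> real" where
  "Sn \<phi> n x = (\<Sum>j<n. \<phi> ((\<alpha>^^j) x))"

definition Pw :: "('a \<Rightarrow> real) \<Rightarrow> nat \<Rightarrow> 'a \<Rightarrow> real" where
  "Pw \<phi> n = (weighted_op A \<phi> ^^ n) (\<lambda>x. 1)"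

definition aa :: "('a \<Rightarrow> real) \<Rightarrow> nat \<Rightarrow> ereal" where
  "aa \<phi> n = eln (supnorm (Pw \<phi> n))"

definition lam :: "('a \<Rightarrow> real) \<Rightarrow> ereal" where
  "lam \<phi> = (INF n\<in>{1..}. aa \<phi> n / ereal (real n))"

lemma Sn_CX[intro]: "\<phi> \<in> CX \<Longrightarrow> Sn \<phi> n \<in> CX"
proof -
  assume "\<phi> \<in> CX"
  then have "(\<lambda>x. \<Sum>j<n. \<phi> ((\<alpha>^^j) x)) \<in> CX" by (intro CX_sum) auto
  then show ?thesis unfolding Sn_def[abs_def] .
qed

lemma Sn_Suc: "Sn \<phi> (Suc n) x = Sn \<phi> n x + \<phi> ((\<alpha>^^n) x)"
  by (simp add: Sn_def)

lemma W_poslin: "\<phi> \<in> CX \<Longrightarrow> poslin (weighted_op A \<phi>)"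
  unfolding weighted_op_def[abs_def] using poslin_weighted[OF PA] .

lemma Wn_poslin: "\<phi> \<in> CX \<Longrightarrow> poslin (weighted_op A \<phi> ^^ n)"
  using poslin_funpow[OF W_poslin] .

lemma Pw_CX[intro]: "\<phi> \<in> CX \<Longrightarrow> Pw \<phi> n \<in> CX"
  unfolding Pw_def using poslin_CX[OF Wn_poslin] by auto

lemma Pw_nonneg: assumes "\<phi> \<in> CX" shows "0 \<le> Pw \<phi> n x"
  unfolding Pw_def using poslin_pos[OF Wn_poslin[OF assms] CX_const] by auto

lemma Pw_eq: "\<phi> \<in> CX \<Longrightarrow> Pw \<phi> n = (A^^n) (\<lambda>x. exp (Sn \<phi> n x))"
proof (induction n)
  case 0 then show ?case by (simp add: Pw_def Sn_def)
next
  case (Suc n)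
  have "Pw \<phi> (Suc n) = weighted_op A \<phi> (Pw \<phi> n)" by (simp add: Pw_def)
  also have "\<dots> = A (\<lambda>x. exp (\<phi> x) * (A^^n) (\<lambda>x. exp (Sn \<phi> n x)) x)"
    using Suc by (simp add: weighted_op_def)
  also have "(\<lambda>x. exp (\<phi> x) * (A^^n) (\<lambda>x. exp (Sn \<phi> n x)) x) =
      (A^^n) (\<lambda>x. exp (\<phi> ((\<alpha>^^n) x)) * exp (Sn \<phi> n x))"
  proof -
    have "(A^^n) (\<lambda>x. exp (\<phi> ((\<alpha>^^n) x)) * exp (Sn \<phi> n x)) = (\<lambda>x. exp (\<phi> x) * (A^^n) (\<lambda>x. exp (Sn \<phi> n x)) x)"
      by (rule hom) (use Suc.prems in auto)
    then show ?thesis by simp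
  qed
  also have "(\<lambda>x. exp (\<phi> ((\<alpha>^^n) x)) * exp (Sn \<phi> n x)) = (\<lambda>x. exp (Sn \<phi> (Suc n) x))"
    by (simp add: Sn_Suc exp_add mult.commute)
  finally show ?case by simp
qed

lemma aa_sub: "\<phi> \<in> CX \<Longrightarrow> aa \<phi> (n + m) \<le> aa \<phi> n + aa \<phi> m"
proof -
  assume phi: "\<phi> \<in> CX"
  let ?W = "weighted_op A \<phi>"
  have eq: "Pw \<phi> (n + m) = (?W^^n) (Pw \<phi> m)" by (simp add: Pw_def funpow_add)
  have nn: "0 \<le> (?W^^n) (Pw \<phi> m) x" for x using Pw_nonneg[OF phi, of "n+m" x] eq by simp
  note eq
  moreover have "(?W^^n) (Pw \<phi> m) x \<le> supnorm (Pw \<phi> m) * supnorm (Pw \<phi> n)" for x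
  proof -
    have "(?W^^n) (Pw \<phi> m) x \<le> supnorm (Pw \<phi> m) * (?W^^n) (\<lambda>x. 1) x"
      using poslin_le_norm[OF cpt Wn_poslin[OF phi] Pw_CX[OF phi]] .
    also have "\<dots> \<le> supnorm (Pw \<phi> m) * supnorm (Pw \<phi> n)"
      using supnorm_ge'[OF cpt Pw_CX[OF phi], of n x] supnorm_nonneg[OF cpt Pw_CX[OF phi], of m]
      unfolding Pw_def by (intro mult_left_mono) auto
    finally show ?thesis .
  qed
  ultimately have "supnorm (Pw \<phi> (n + m)) \<le> supnorm (Pw \<phi> m) * supnorm (Pw \<phi> n)"
    using nn by (intro supnorm_le_pos) auto
  then have "aa \<phi> (n + m) \<le> eln (supnorm (Pw \<phi> m) * supnorm (Pw \<phi> n))"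
    unfolding aa_def by (rule eln_mono)
  also have "\<dots> = aa \<phi> n + aa \<phi> m"
    unfolding aa_def using supnorm_nonneg[OF cpt Pw_CX[OF phi]]
    by (subst eln_mult) (auto simp: add.commute)
  finally show ?thesis .
qed

lemma lam_tendsto: "\<phi> \<in> CX \<Longrightarrow> (\<lambda>n. aa \<phi> n / ereal (real n)) \<longlonglongrightarrow> lam \<phi>"
  unfolding lam_def by (rule fekete_ereal) (auto simp: aa_def aa_sub[unfolded aa_def])

lemma spectral_eq: "\<phi> \<in> CX \<Longrightarrow> spectral_potential A \<phi> = lam \<phi>"
proof -
  assume phi: "\<phi> \<in> CX"
  have "(\<lambda>n. aa \<phi> n / ereal (real n)) = (\<lambda>n. eln (supnorm ((weighted_op A \<phi> ^^ n) (\<lambda>x. 1))) / ereal (real n))"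
    by (simp add: aa_def Pw_def)
  then show ?thesis unfolding spectral_potential_def using limI[OF lam_tendsto[OF phi]] by simp
qed

lemma lam_le: "n \<ge> 1 \<Longrightarrow> lam \<phi> \<le> aa \<phi> n / ereal (real n)"
  unfolding lam_def by (rule INF_lower) auto

lemma inv_funpow: "\<mu> \<in> inv_states \<alpha> \<Longrightarrow> f \<in> CX \<Longrightarrow> \<mu> (\<lambda>x. f ((\<alpha>^^j) x)) = \<mu> f"
proof (induction j arbitrary: f)
  case 0 then show ?case by simp
next
  case (Suc j)
  have fa: "(\<lambda>x. f (\<alpha> x)) \<in> CX" using Suc.prems cont\<alpha> by auto
  have "\<mu> (\<lambda>x. f ((\<alpha>^^Suc j) x)) = \<mu> (\<lambda>x. (\<lambda>x. f (\<alpha> x)) ((\<alpha>^^j) x))" by simp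
  also have "\<dots> = \<mu> (\<lambda>x. f (\<alpha> x))" using Suc.IH[OF Suc.prems(1) fa] .
  also have "\<dots> = \<mu> f" using Suc.prems by (auto simp: inv_states_def)
  finally show ?case .
qed

lemma mu_Sn: "\<mu> \<in> inv_states \<alpha> \<Longrightarrow> \<phi> \<in> CX \<Longrightarrow> \<mu> (Sn \<phi> n) = n * \<mu> \<phi>"
proof -
  assume mu: "\<mu> \<in> inv_states \<alpha>" and phi: "\<phi> \<in> CX"
  have ms: "\<mu> \<in> states" using mu by (simp add: inv_states_def)
  have "\<mu> (Sn \<phi> n) = \<mu> (\<lambda>x. \<Sum>j<n. \<phi> ((\<alpha>^^j) x))" by (simp add: Sn_def[abs_def])
  also have "\<dots> = (\<Sum>j<n. \<mu> (\<lambda>x. \<phi> ((\<alpha>^^j) x)))"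
    using states_sum[OF ms, of "{..<n}" "\<lambda>j x. \<phi> ((\<alpha>^^j) x)"] phi by auto
  also have "\<dots> = n * \<mu> \<phi>" using inv_funpow[OF mu phi] by simp
  finally show ?thesis .
qed

end



lemma merge_list:
  fixes Q :: "('a \<Rightarrow> real) \<Rightarrow> bool"
  assumes dbl: "\<And>f. Q f \<Longrightarrow> Q (\<lambda>x. f x + f x)"
  shows "(\<forall>f\<in>set L. Q f) \<Longrightarrow> \<exists>L'. distinct L' \<and> length L' \<le> length L \<and> (\<forall>f\<in>set L'. Q f) \<and>
     (\<forall>x. sum_list (map (\<lambda>f. f x) L') = sum_list (map (\<lambda>f. f x) L))"
proof (induction "length L" arbitrary: L rule: less_induct)
  case less
  show ?case
  proof (cases L)
    case Nil then show ?thesis by auto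
  next
    case (Cons f L0)
    have "length L0 < length L" using Cons by simp
    then obtain L1 where L1: "distinct L1" "length L1 \<le> length L0" "\<forall>f\<in>set L1. Q f"
      "\<forall>x. sum_list (map (\<lambda>f. f x) L1) = sum_list (map (\<lambda>f. f x) L0)"
      using less Cons by force
    have Qf: "Q f" using less.prems Cons by simp
    show ?thesis
    proof (cases "f \<in> set L1")
      case False
      then show ?thesis using L1 Qf Cons by (intro exI[of _ "f # L1"]) auto
    next
      case True
      define L2 where "L2 = (\<lambda>x. f x + f x) # remove1 f L1"
      have "length L1 > 0" using True by (cases L1) auto
      then have len: "length L2 < length L" using True L1(2) Cons unfolding L2_def
        by (simp add: length_remove1)
      have Q2: "\<forall>g\<in>set L2. Q g" unfolding L2_def using L1(3) dbl[OF Qf] set_remove1_subset[of f L1]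
        by auto
      obtain L3 where L3: "distinct L3" "length L3 \<le> length L2" "\<forall>f\<in>set L3. Q f"
        "\<forall>x. sum_list (map (\<lambda>f. f x) L3) = sum_list (map (\<lambda>f. f x) L2)"
        using less(1)[OF len Q2] by blast
      have "sum_list (map (\<lambda>f. f x) L2) = sum_list (map (\<lambda>f. f x) L)" for x
        using sum_list_map_remove1[OF True, of "\<lambda>f. f x"] L1(4) Cons unfolding L2_def by simp
      then show ?thesis using L3 len by (intro exI[of _ L3]) auto
    qed
  qed
qed

section \<open>partition construction\<close>

definition ramp :: "real \<Rightarrow> real \<Rightarrow> nat \<Rightarrow> real \<Rightarrow> real" where
  "ramp a d j t = min 1 (max 0 ((t - a) / d - real j))"

lemma ramp_cont: "continuous_on UNIV (ramp a d j)"
  unfolding ramp_def[abs_def] divide_inverse by (intro continuous_intros)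

lemma ramp_mono: "d > 0 \<Longrightarrow> ramp a d (Suc j) t \<le> ramp a d j t"
  unfolding ramp_def by (auto simp: min_def max_def)

lemma ramp_pos_diff:
  assumes "d > 0" "ramp a d (Suc j) t < ramp a d j t"
  shows "\<bar>t - (a + (real j + 1) * d)\<bar> \<le> d"
proof -
  let ?u = "(t - a) / d - real j"
  have "0 < ?u" "?u - 1 < 1" using assms unfolding ramp_def by (auto simp: min_def max_def split: if_splits)
  then have "0 < (t - a) / d - j" "(t - a) / d - j < 2" by auto
  then have "j * d < t - a" "t - a < (j + 2) * d" using assms(1) by (auto simp: field_simps)
  then show ?thesis by (auto simp: abs_if algebra_simps)
qed

lemma fine_partition:
  fixes \<psi> :: "'a::topological_space \<Rightarrow> real"
  assumes cpt: "compact (UNIV::'a set)" and psi: "\<psi> \<in> CX" and d: "d > 0"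
  shows "\<exists>D. partition_of_unity D \<and> (\<forall>g\<in>D. \<exists>s. \<forall>x. g x > 0 \<longrightarrow> \<bar>\<psi> x - s\<bar> \<le> d)"
proof -
  obtain B where B: "\<And>x. \<bar>\<psi> x\<bar> \<le> B" using CX_bounded[OF cpt psi] by auto
  define a where "a = - B - d"
  define M where "M = nat (ceiling ((2 * B + d) / d))"
  define g where "g j x = ramp a d j (\<psi> x) - ramp a d (Suc j) (\<psi> x)" for j x
  define Q where "Q f \<longleftrightarrow> f \<in> CX \<and> (\<forall>x. 0 \<le> f x) \<and> (\<exists>s. \<forall>x. f x > 0 \<longrightarrow> \<bar>\<psi> x - s\<bar> \<le> d)" for f
  have dbl: "Q (\<lambda>x. f x + f x)" if "Q f" for f
    using that unfolding Q_def by (auto simp: add_pos_pos)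
  have Qg: "Q (g j)" for j
  proof -
    have "g j \<in> CX" using CX_diff[OF CX_comp_real[OF psi ramp_cont] CX_comp_real[OF psi ramp_cont]]
      unfolding g_def[abs_def] by simp
    moreover have "\<forall>x. 0 \<le> g j x" unfolding g_def using ramp_mono[OF d] by simp
    moreover have "\<forall>x. g j x > 0 \<longrightarrow> \<bar>\<psi> x - (a + (real j + 1) * d)\<bar> \<le> d"
      unfolding g_def using ramp_pos_diff[OF d] by simp
    ultimately show ?thesis unfolding Q_def by blast
  qed
  have sum1: "(\<Sum>j<M. g j x) = 1" for x
  proof -
    have "(\<Sum>j<M. g j x) = ramp a d 0 (\<psi> x) - ramp a d M (\<psi> x)"
      unfolding g_def by (rule sum_lessThan_telescope')
    moreover have "ramp a d 0 (\<psi> x) = 1"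
    proof -
      have "1 \<le> (\<psi> x - a) / d" using B[of x] d unfolding a_def by (simp add: field_simps abs_le_iff)
      then show ?thesis unfolding ramp_def by simp
    qed
    moreover have "ramp a d M (\<psi> x) = 0"
    proof -
      have "(\<psi> x - a) / d \<le> (2 * B + d) / d" using B[of x] d unfolding a_def
        by (intro divide_right_mono) (auto simp: abs_le_iff)
      also have "\<dots> \<le> real M" unfolding M_def by linarith
      finally show ?thesis unfolding ramp_def by simp
    qed
    ultimately show ?thesis by simp
  qed
  obtain L' where L': "distinct L'" "\<forall>f\<in>set L'. Q f"
    "\<forall>x. sum_list (map (\<lambda>f. f x) L') = sum_list (map (\<lambda>f. f x) (map g [0..<M]))"
    using merge_list[of Q, OF dbl, of "map g [0..<M]"] Qg by auto
  have "(\<Sum>f\<in>set L'. f x) = 1" for x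
  proof -
    have "(\<Sum>f\<in>set L'. f x) = sum_list (map (\<lambda>f. f x) L')"
      using sum_list_distinct_conv_sum_set[OF L'(1), of "\<lambda>f. f x"] by simp
    also have "\<dots> = sum_list (map (\<lambda>j. g j x) [0..<M])" using L'(3) by (simp add: o_def)
    also have "\<dots> = (\<Sum>j\<in>set [0..<M]. g j x)" by (rule sum_set_upt_conv_sum_list_nat[symmetric])
    also have "\<dots> = 1" using sum1[of x] by (simp add: atLeast0LessThan)
    finally show ?thesis .
  qed
  then have "partition_of_unity (set L')" using L'(2) unfolding partition_of_unity_def Q_def by auto
  moreover have "\<forall>g\<in>set L'. \<exists>s. \<forall>x. g x > 0 \<longrightarrow> \<bar>\<psi> x - s\<bar> \<le> d" using L'(2) unfolding Q_def by auto
  ultimately show ?thesis by blast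
qed

section \<open>Jensen\<close>

lemma exp_jensen:
  fixes c y :: "'b \<Rightarrow> real"
  assumes "finite S" "S \<noteq> {}" "\<And>i. i \<in> S \<Longrightarrow> c i \<ge> 0" "sum c S = 1"
  shows "exp (\<Sum>i\<in>S. c i * y i) \<le> (\<Sum>i\<in>S. c i * exp (y i))"
  using convex_on_sum[OF assms(1,2) exp_convex assms(4), of y] assms(3) by simp

lemma jensen_ln:
  fixes c z :: "'b \<Rightarrow> real"
  assumes "finite S" "S \<noteq> {}" "\<And>i. i \<in> S \<Longrightarrow> c i > 0" "\<And>i. i \<in> S \<Longrightarrow> z i > 0" "sum c S = 1"
  shows "(\<Sum>i\<in>S. c i * ln (z i / c i)) \<le> ln (\<Sum>i\<in>S. z i)"
proof -
  have "exp (\<Sum>i\<in>S. c i * ln (z i / c i)) \<le> (\<Sum>i\<in>S. c i * exp (ln (z i / c i)))"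
    using assms by (intro exp_jensen) (auto intro: less_imp_le)
  also have "\<dots> = (\<Sum>i\<in>S. z i)"
  proof (intro sum.cong refl)
    fix i assume "i \<in> S"
    then show "c i * exp (ln (z i / c i)) = z i" using assms(3,4)[OF \<open>i \<in> S\<close>]
      by (subst exp_ln) (auto simp: field_simps)
  qed
  finally have "exp (\<Sum>i\<in>S. c i * ln (z i / c i)) \<le> (\<Sum>i\<in>S. z i)" .
  moreover have "(\<Sum>i\<in>S. z i) > 0" using assms by (intro sum_pos) auto
  ultimately show ?thesis by (metis exp_le_cancel_iff exp_ln)
qed

lemma ln_sum_ge:
  fixes p w :: "'b \<Rightarrow> real"
  assumes "finite S" "\<And>i. i \<in> S \<Longrightarrow> p i \<ge> 0" "\<And>i. i \<in> S \<Longrightarrow> w i > 0" "sum p S = 1"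
  shows "(\<Sum>i\<in>S. p i * ln (w i)) \<le> ln (\<Sum>i\<in>S. p i * w i)"
proof -
  have ne: "S \<noteq> {}" using assms(4) by auto
  have "exp (\<Sum>i\<in>S. p i * ln (w i)) \<le> (\<Sum>i\<in>S. p i * exp (ln (w i)))"
    using assms ne by (intro exp_jensen) auto
  also have "\<dots> = (\<Sum>i\<in>S. p i * w i)" using assms(3) by (intro sum.cong) auto
  finally have "exp (\<Sum>i\<in>S. p i * ln (w i)) \<le> (\<Sum>i\<in>S. p i * w i)" .
  moreover have "(\<Sum>i\<in>S. p i * w i) > 0"
  proof -
    have "\<exists>i\<in>S. p i > 0"
    proof (rule ccontr)
      assume "\<not> ?thesis"
      then have "\<forall>i\<in>S. p i = 0" using assms(2) by force
      then have "sum p S = 0" by simp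
      with assms(4) show False by simp
    qed
    then obtain i where "i \<in> S" "p i > 0" by blast
    then have "0 < p i * w i" using assms(3) by simp
    also have "\<dots> \<le> (\<Sum>i\<in>S. p i * w i)" using \<open>i \<in> S\<close> assms
      by (intro member_le_sum) (simp_all add: less_imp_le)
    finally show ?thesis .
  qed
  ultimately show ?thesis by (metis exp_le_cancel_iff exp_ln)
qed

lemma ereal_sum_minf:
  fixes t :: "'b \<Rightarrow> ereal"
  assumes "finite D" "g0 \<in> D" "t g0 = -\<infinity>" "\<And>g. g \<in> D \<Longrightarrow> t g \<noteq> \<infinity>"
  shows "(\<Sum>g\<in>D. t g) = -\<infinity>"
proof -
  have "(\<Sum>g\<in>D. t g) = t g0 + (\<Sum>g\<in>D - {g0}. t g)" using assms by (simp add: sum.remove)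
  moreover have "(\<Sum>g\<in>D - {g0}. t g) \<noteq> \<infinity>" using assms by (auto simp: sum_Pinfty)
  ultimately show ?thesis using assms(3) by simp
qed

lemma tau_term_pos:
  "c > 0 \<Longrightarrow> x > 0 \<Longrightarrow> ereal c * eln x = ereal (c * ln x)"
  by (simp add: eln_def)

lemma tau_term_zero:
  "c > 0 \<Longrightarrow> x \<le> 0 \<Longrightarrow> ereal c * eln x = -\<infinity>"
  by (simp add: eln_def)



context sys begin

lemma part_facts:
  assumes "partition_of_unity D"
  shows "finite D" "\<And>g. g \<in> D \<Longrightarrow> g \<in> CX" "\<And>g x. g \<in> D \<Longrightarrow> 0 \<le> g x" "\<And>x. (\<Sum>g\<in>D. g x) = 1"
  using assms unfolding partition_of_unity_def by auto

lemma mu_part_sum: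
  assumes mu: "\<mu> \<in> states" and D: "partition_of_unity D"
  shows "(\<Sum>g\<in>D. \<mu> g) = 1"
proof -
  have "(\<Sum>g\<in>D. \<mu> g) = \<mu> (\<lambda>x. \<Sum>g\<in>D. g x)"
    using states_sum[OF mu part_facts(1)[OF D], of "\<lambda>g. g"] part_facts(2)[OF D] by simp
  also have "\<dots> = 1" using part_facts(4)[OF D] states_one[OF mu] by simp
  finally show ?thesis .
qed

lemma tau_bound:
  assumes mu: "\<mu> \<in> states" and psi: "\<psi> \<in> CX" and d: "d > 0" and D: "partition_of_unity D"
    and P: "\<forall>g\<in>D. \<exists>s. \<forall>x. g x > 0 \<longrightarrow> \<bar>\<psi> x - s\<bar> \<le> d"
  shows "tau_nD A \<mu> n D \<le> eln (supnorm ((A^^n) (\<lambda>x. exp (\<psi> x)))) - ereal (\<mu> \<psi>) + ereal (2 * d)"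
proof -
  from P obtain s where s: "\<forall>g\<in>D. \<forall>x. g x > 0 \<longrightarrow> \<bar>\<psi> x - s g\<bar> \<le> d" by metis
  note fin = part_facts(1)[OF D] and DCX = part_facts(2)[OF D] and gnn = part_facts(3)[OF D]
    and gsum = part_facts(4)[OF D]
  define c where "c g = \<mu> g" for g
  define S where "S = {g\<in>D. c g \<noteq> 0}"
  have finS: "finite S" using fin unfolding S_def by simp
  have cnn: "c g \<ge> 0" if "g \<in> D" for g unfolding c_def using states_pos[OF mu DCX[OF that] gnn[OF that]] .
  have cpos: "c g > 0" if "g \<in> S" for g using that cnn unfolding S_def by force
  have csum: "sum c D = 1" unfolding c_def using mu_part_sum[OF mu D] .
  have "sum c S = sum c D" using fin unfolding S_def by (intro sum.mono_neutral_left) auto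
  then have cS: "sum c S = 1" using csum by simp
  have Sne: "S \<noteq> {}" using cS by auto
  define N where "N = supnorm ((A^^n) (\<lambda>x. exp (\<psi> x)))"
  have expCX: "(\<lambda>x. exp (\<psi> x)) \<in> CX" using psi by auto
  have bnd: "(\<Sum>g\<in>D. (if \<mu> g = 0 then 0 else ereal (\<mu> g) * eln (m ((A ^^ n) g) / \<mu> g)))
        \<le> eln N - ereal (\<mu> \<psi>) + ereal (2 * d)" if m: "m \<in> states" for m
  proof -
    define h where "h g = (A^^n) g" for g
    have hCX: "h g \<in> CX" if "g \<in> D" for g unfolding h_def using DCX[OF that] by auto
    have mh: "m (h g) \<ge> 0" if "g \<in> D" for g unfolding h_def
      using states_pos[OF m An_CX[OF DCX[OF that]]] poslin_pos[OF PAn DCX[OF that] gnn[OF that]] by auto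
    define t where "t g = (if c g = 0 then 0 else ereal (c g) * eln (m (h g) / c g))" for g
    have tfin: "t g \<noteq> \<infinity>" if "g \<in> D" for g
      using cnn[OF that] unfolding t_def by (auto simp: eln_def)
    have "(\<Sum>g\<in>D. t g) \<le> eln N - ereal (\<mu> \<psi>) + ereal (2 * d)"
    proof (cases "\<exists>g\<in>S. m (h g) = 0")
      case True
      then obtain g0 where g0: "g0 \<in> S" "m (h g0) = 0" by blast
      have "t g0 = -\<infinity>" using g0 cpos[OF g0(1)] unfolding t_def S_def by (simp add: tau_term_zero)
      then have "(\<Sum>g\<in>D. t g) = -\<infinity>" using g0(1) fin tfin unfolding S_def by (intro ereal_sum_minf) auto
      then show ?thesis by simp
    next
      case False
      then have mhpos: "m (h g) > 0" if "g \<in> S" for g using mh that unfolding S_def by force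
      have "(\<Sum>g\<in>D. t g) = (\<Sum>g\<in>S. t g)"
        unfolding S_def using fin by (intro sum.mono_neutral_right) (auto simp: t_def)
      also have "\<dots> = (\<Sum>g\<in>S. ereal (c g * ln (m (h g) / c g)))"
        using cpos mhpos unfolding t_def by (intro sum.cong refl) (auto simp: tau_term_pos)
      also have "\<dots> = ereal (\<Sum>g\<in>S. c g * ln (m (h g) / c g))" by (rule sum_ereal)
      finally have eqs: "(\<Sum>g\<in>D. t g) = ereal (\<Sum>g\<in>S. c g * ln (m (h g) / c g))" .
      define z where "z g = exp (s g) * m (h g)" for g
      have zpos: "z g > 0" if "g \<in> S" for g unfolding z_def using mhpos[OF that] by simp
      have znn: "z g \<ge> 0" if "g \<in> D" for g unfolding z_def using mh[OF that] by simp
      have step1: "(\<Sum>g\<in>S. c g * ln (m (h g) / c g)) = (\<Sum>g\<in>S. c g * ln (z g / c g)) - (\<Sum>g\<in>S. c g * s g)"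
      proof -
        have "c g * ln (m (h g) / c g) = c g * ln (z g / c g) - c g * s g" if "g \<in> S" for g
        proof -
          have "ln (z g / c g) = s g + ln (m (h g) / c g)"
            unfolding z_def using mhpos[OF that] cpos[OF that]
            by (simp add: ln_div ln_mult)
          then show ?thesis by (simp add: algebra_simps)
        qed
        then show ?thesis by (simp add: sum_subtractf[symmetric])
      qed
      have step2: "(\<Sum>g\<in>S. c g * ln (z g / c g)) \<le> ln (\<Sum>g\<in>S. z g)"
        by (rule jensen_ln[OF finS Sne cpos zpos cS])
      have step3: "(\<Sum>g\<in>S. z g) \<le> exp d * N"
      proof -
        have "(\<Sum>g\<in>S. z g) \<le> (\<Sum>g\<in>D. z g)"
          using fin znn unfolding S_def by (intro sum_mono2) auto
        also have "\<dots> = m (\<lambda>x. \<Sum>g\<in>D. exp (s g) * h g x)"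
        proof -
          have "m (\<lambda>x. \<Sum>g\<in>D. exp (s g) * h g x) = (\<Sum>g\<in>D. m (\<lambda>x. exp (s g) * h g x))"
            by (rule states_sum[OF m fin]) (rule CX_scale[OF hCX])
          also have "\<dots> = (\<Sum>g\<in>D. z g)" unfolding z_def using states_scale[OF m hCX] by simp
          finally show ?thesis by simp
        qed
        also have "(\<lambda>x. \<Sum>g\<in>D. exp (s g) * h g x) = (A^^n) (\<lambda>x. \<Sum>g\<in>D. exp (s g) * g x)"
        proof -
          have "(A^^n) (\<lambda>x. \<Sum>g\<in>D. exp (s g) * g x) = (\<lambda>x. \<Sum>g\<in>D. (A^^n) (\<lambda>x. exp (s g) * g x) x)"
            using poslin_sum[OF PAn fin, of "\<lambda>g x. exp (s g) * g x"] DCX by auto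
          also have "\<dots> = (\<lambda>x. \<Sum>g\<in>D. exp (s g) * h g x)"
            unfolding h_def using poslin_scale[OF PAn DCX] by simp
          finally show ?thesis by simp
        qed
        also have "m ((A^^n) (\<lambda>x. \<Sum>g\<in>D. exp (s g) * g x)) \<le> m ((A^^n) (\<lambda>x. exp d * exp (\<psi> x)))"
        proof -
          have pt: "(\<Sum>g\<in>D. exp (s g) * g x) \<le> exp d * exp (\<psi> x)" for x
          proof -
            have "(\<Sum>g\<in>D. exp (s g) * g x) \<le> (\<Sum>g\<in>D. exp (\<psi> x + d) * g x)"
            proof (intro sum_mono)
              fix g assume g: "g \<in> D"
              show "exp (s g) * g x \<le> exp (\<psi> x + d) * g x"
              proof (cases "g x > 0")
                case True
                then have "s g \<le> \<psi> x + d" using s g by force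
                then show ?thesis using True by (intro mult_right_mono) auto
              next
                case False then show ?thesis using gnn[OF g, of x] by simp
              qed
            qed
            also have "\<dots> = exp (\<psi> x + d)" using gsum[of x] by (simp add: sum_distrib_left[symmetric])
            finally show ?thesis by (simp add: exp_add mult.commute)
          qed
          have sCX: "(\<lambda>x. \<Sum>g\<in>D. exp (s g) * g x) \<in> CX" by (intro CX_sum CX_scale DCX)
          show ?thesis
            by (rule states_mono[OF m An_CX[OF sCX] An_CX[OF CX_scale[OF expCX]]])
              (rule poslin_mono[OF PAn sCX CX_scale[OF expCX] pt])
        qed
        also have "\<dots> = exp d * m ((A^^n) (\<lambda>x. exp (\<psi> x)))"
          using poslin_scale[OF PAn expCX, where c = "exp d"] states_scale[OF m An_CX[OF expCX]] by simp
        also have "\<dots> \<le> exp d * N"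
          unfolding N_def using states_le_norm[OF cpt m An_CX[OF expCX]] by simp
        finally show ?thesis .
      qed
      have Spos: "(\<Sum>g\<in>S. z g) > 0" using Sne finS zpos by (intro sum_pos) auto
      then have Npos: "N > 0" using step3 by (smt (verit) exp_gt_zero zero_less_mult_iff)
      have step4: "ln (\<Sum>g\<in>S. z g) \<le> d + ln N"
      proof -
        have "ln (\<Sum>g\<in>S. z g) \<le> ln (exp d * N)" using step3 Spos by simp
        also have "\<dots> = d + ln N" using Npos by (simp add: ln_mult)
        finally show ?thesis .
      qed
      have step5: "(\<Sum>g\<in>S. c g * s g) \<ge> \<mu> \<psi> - d"
      proof -
        have "(\<Sum>g\<in>S. c g * s g) = (\<Sum>g\<in>D. c g * s g)"
          unfolding S_def using fin by (intro sum.mono_neutral_left) auto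
        also have "\<dots> = \<mu> (\<lambda>x. \<Sum>g\<in>D. s g * g x)"
        proof -
          have "\<mu> (\<lambda>x. \<Sum>g\<in>D. s g * g x) = (\<Sum>g\<in>D. \<mu> (\<lambda>x. s g * g x))"
            by (rule states_sum[OF mu fin]) (rule CX_scale[OF DCX])
          also have "\<dots> = (\<Sum>g\<in>D. c g * s g)" unfolding c_def using states_scale[OF mu DCX]
            by (intro sum.cong refl) (subst states_scale[OF mu DCX], auto)
          finally show ?thesis by simp
        qed
        also have "\<dots> \<ge> \<mu> (\<lambda>x. \<psi> x - d)"
        proof (rule states_mono[OF mu])
          show "(\<lambda>x. \<psi> x - d) \<in> CX" using psi by auto
          show "(\<lambda>x. \<Sum>g\<in>D. s g * g x) \<in> CX" by (intro CX_sum CX_scale DCX)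
          fix x
          have "\<psi> x - d = (\<Sum>g\<in>D. (\<psi> x - d) * g x)" using gsum[of x] by (simp add: sum_distrib_left[symmetric])
          also have "\<dots> \<le> (\<Sum>g\<in>D. s g * g x)"
          proof (intro sum_mono)
            fix g assume g: "g \<in> D"
            show "(\<psi> x - d) * g x \<le> s g * g x"
            proof (cases "g x > 0")
              case True
              then have "\<psi> x - d \<le> s g" using s g by force
              then show ?thesis using True by (intro mult_right_mono) auto
            next
              case False then show ?thesis using gnn[OF g, of x] by simp
            qed
          qed
          finally show "\<psi> x - d \<le> (\<Sum>g\<in>D. s g * g x)" .
        qed
        also have "\<mu> (\<lambda>x. \<psi> x - d) = \<mu> \<psi> - d" using states_diff[OF mu psi CX_const] states_const[OF mu] by simp
        finally show ?thesis by simp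
      qed
      have "(\<Sum>g\<in>S. c g * ln (m (h g) / c g)) \<le> ln N - \<mu> \<psi> + 2 * d"
        using step1 step2 step4 step5 by linarith
      then show ?thesis using eqs Npos by (simp add: eln_pos)
    qed
    then show ?thesis unfolding t_def c_def h_def .
  qed
  show ?thesis unfolding tau_nD_def N_def[symmetric] by (rule SUP_least) (rule bnd)
qed

end



lemma ereal_div_minus:
  fixes x :: ereal and r :: real
  assumes "x \<noteq> \<infinity>" "n > 0"
  shows "(x - ereal (n * r)) / ereal n = x / ereal n - ereal r"
  using assms by (cases x) (auto simp: ereal_divide field_simps)

lemma ereal_plus_le_minus:
  fixes t L :: ereal and r :: real
  shows "t + ereal r \<le> L \<Longrightarrow> t \<le> L - ereal r"
  by (cases t; cases L) auto

lemma ereal_le_minus_plus: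
  fixes t L :: ereal and r :: real
  shows "t \<le> L - ereal r \<Longrightarrow> t + ereal r \<le> L"
  by (cases t; cases L) auto

context sys begin

lemma tau_n_upper:
  assumes mu: "\<mu> \<in> inv_states \<alpha>" and phi: "\<phi> \<in> CX"
  shows "tau_n A \<mu> n \<le> aa \<phi> n - ereal (n * \<mu> \<phi>)"
proof (rule ereal_le_epsilon2)
  fix e :: real assume e: "e > 0"
  have ms: "\<mu> \<in> states" using mu by (simp add: inv_states_def)
  obtain D where D: "partition_of_unity D" "\<forall>g\<in>D. \<exists>s. \<forall>x. g x > 0 \<longrightarrow> \<bar>Sn \<phi> n x - s\<bar> \<le> e / 2"
    using fine_partition[OF cpt Sn_CX[OF phi], of "e/2" n] e by auto
  have "tau_n A \<mu> n \<le> tau_nD A \<mu> n D" unfolding tau_n_def using D(1) by (intro INF_lower) auto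
  also have "\<dots> \<le> eln (supnorm ((A^^n) (\<lambda>x. exp (Sn \<phi> n x)))) - ereal (\<mu> (Sn \<phi> n)) + ereal (2 * (e/2))"
    using tau_bound[OF ms Sn_CX[OF phi] _ D(1) D(2)] e by simp
  also have "\<dots> = aa \<phi> n - ereal (n * \<mu> \<phi>) + ereal e"
    unfolding aa_def Pw_eq[OF phi] mu_Sn[OF mu phi] by simp
  finally show "tau_n A \<mu> n \<le> aa \<phi> n - ereal (n * \<mu> \<phi>) + ereal e" .
qed

lemma upper:
  assumes mu: "\<mu> \<in> inv_states \<alpha>" and phi: "\<phi> \<in> CX"
  shows "t_entropy A \<mu> \<le> lam \<phi> - ereal (\<mu> \<phi>)"
proof (rule ereal_plus_le_minus)
  show "t_entropy A \<mu> + ereal (\<mu> \<phi>) \<le> lam \<phi>"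
    unfolding lam_def
  proof (rule INF_greatest)
    fix n :: nat assume n: "n \<in> {1..}"
    have "t_entropy A \<mu> \<le> tau_n A \<mu> n / ereal (real n)"
      unfolding t_entropy_def using n by (intro INF_lower) auto
    also have "\<dots> \<le> (aa \<phi> n - ereal (n * \<mu> \<phi>)) / ereal (real n)"
      using n by (intro ereal_divide_right_mono tau_n_upper[OF mu phi]) auto
    also have "\<dots> = aa \<phi> n / ereal (real n) - ereal (\<mu> \<phi>)"
      using n by (intro ereal_div_minus) (auto simp: aa_def)
    finally show "t_entropy A \<mu> + ereal (\<mu> \<phi>) \<le> aa \<phi> n / ereal (real n)"
      by (rule ereal_le_minus_plus)
  qed
qed

end



lemma sum_regroup:
  fixes f :: "nat \<Rightarrow> real"
  shows "(\<Sum>j<n * k. f j) = (\<Sum>r<n. \<Sum>i<k. f (n * i + r))"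
proof -
  have "(\<Sum>j<n * k. f j) = (\<Sum>j<k * n. f j)" by (simp add: mult.commute)
  also have "\<dots> = (\<Sum>i<k. sum f {i * n..<i * n + n})" by (rule sum.nat_group[symmetric])
  also have "\<dots> = (\<Sum>i<k. \<Sum>r<n. f (n * i + r))"
  proof (rule sum.cong[OF refl])
    fix i assume "i \<in> {..<k}"
    have "sum f {i * n..<i * n + n} = sum f {0 + i * n..<n + i * n}" by (simp add: add.commute)
    also have "\<dots> = (\<Sum>r\<in>{0..<n}. f (r + i * n))" by (rule sum.shift_bounds_nat_ivl)
    also have "\<dots> = (\<Sum>r<n. f (n * i + r))" by (simp add: atLeast0LessThan algebra_simps)
    finally show "sum f {i * n..<i * n + n} = (\<Sum>r<n. f (n * i + r))" .
  qed
  also have "\<dots> = (\<Sum>r<n. \<Sum>i<k. f (n * i + r))" by (rule sum.swap)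
  finally show ?thesis .
qed

context sys begin

lemma An_le_const:
  assumes "f \<in> CX" "\<And>x. f x \<le> c" "c \<ge> 0"
  shows "(A^^m) f x \<le> c * supnorm ((A^^m) (\<lambda>x. 1))"
proof -
  have "(A^^m) f x \<le> (A^^m) (\<lambda>x. c * 1) x" using assms by (intro poslin_mono[OF PAn]) auto
  also have "\<dots> = c * (A^^m) (\<lambda>x. 1) x" using poslin_scale[OF PAn CX_const[of 1], where c = c] by simp
  also have "\<dots> \<le> c * supnorm ((A^^m) (\<lambda>x. 1))"
    using assms(3) supnorm_ge'[OF cpt An_CX[OF CX_const]] by (intro mult_left_mono) auto
  finally show ?thesis .
qed

lemma An_nonneg: "f \<in> CX \<Longrightarrow> (\<And>x. f x \<ge> 0) \<Longrightarrow> (A^^m) f x \<ge> 0"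
  using poslin_pos[OF PAn] by blast

definition VV :: "('a \<Rightarrow> real) \<Rightarrow> nat \<Rightarrow> nat \<Rightarrow> 'a \<Rightarrow> real" where
  "VV \<psi> n j x = (\<Sum>i<j. \<psi> ((\<alpha>^^(n * i)) x))"

lemma VV_CX[intro]: "\<psi> \<in> CX \<Longrightarrow> VV \<psi> n j \<in> CX"
proof -
  assume "\<psi> \<in> CX"
  then have "(\<lambda>x. \<Sum>i<j. \<psi> ((\<alpha>^^(n * i)) x)) \<in> CX" by (intro CX_sum) auto
  then show ?thesis unfolding VV_def[abs_def] .
qed

lemma VV_Suc: "VV \<psi> n (Suc j) x = VV \<psi> n j x + \<psi> ((\<alpha>^^(n * j)) x)"
  by (simp add: VV_def)

lemma Q_bound:
  assumes psi: "\<psi> \<in> CX"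
  shows "(A^^(n * j)) (\<lambda>x. exp (VV \<psi> n j x)) x \<le> supnorm ((A^^n) (\<lambda>x. exp (\<psi> x))) ^ j"
proof (induction j arbitrary: x)
  case 0 then show ?case by (simp add: VV_def)
next
  case (Suc j)
  define N where "N = supnorm ((A^^n) (\<lambda>x. exp (\<psi> x)))"
  define Q where "Q = (A^^(n * j)) (\<lambda>x. exp (VV \<psi> n j x))"
  have ecx: "(\<lambda>x. exp (\<psi> x)) \<in> CX" using psi by auto
  have QCX: "Q \<in> CX" unfolding Q_def using psi by auto
  have Qnn: "Q x \<ge> 0" for x unfolding Q_def using psi by (intro An_nonneg) auto
  have Qle: "Q x \<le> N ^ j" for x using Suc.IH unfolding Q_def N_def .
  have Nnn: "N \<ge> 0" unfolding N_def using supnorm_nonneg[OF cpt An_CX[OF ecx]] .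
  have "(A^^(n * Suc j)) (\<lambda>x. exp (VV \<psi> n (Suc j) x)) = (A^^n) ((A^^(n*j)) (\<lambda>x. exp (\<psi> ((\<alpha>^^(n * j)) x)) * exp (VV \<psi> n j x)))"
    by (simp add: funpow_add VV_Suc exp_add mult.commute)
  also have "(A^^(n*j)) (\<lambda>x. exp (\<psi> ((\<alpha>^^(n * j)) x)) * exp (VV \<psi> n j x)) = (\<lambda>x. exp (\<psi> x) * Q x)"
    unfolding Q_def by (rule hom) (use psi in auto)
  finally have eq: "(A^^(n * Suc j)) (\<lambda>x. exp (VV \<psi> n (Suc j) x)) = (A^^n) (\<lambda>x. exp (\<psi> x) * Q x)" .
  have "(A^^n) (\<lambda>x. exp (\<psi> x) * Q x) x \<le> (A^^n) (\<lambda>x. N ^ j * exp (\<psi> x)) x"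
    using QCX ecx Qle by (intro poslin_mono[OF PAn]) (auto simp: mult.commute intro: mult_left_mono)
  also have "\<dots> = N ^ j * (A^^n) (\<lambda>x. exp (\<psi> x)) x" using poslin_scale[OF PAn ecx, where c = "N^j"] by simp
  also have "\<dots> \<le> N ^ j * N" unfolding N_def
    using supnorm_ge'[OF cpt An_CX[OF ecx]] Nnn by (intro mult_left_mono) (auto simp: N_def)
  finally show ?case using eq by (simp add: N_def mult.commute)
qed

end



context sys begin

lemma term_bound:
  assumes psi: "\<psi> \<in> CX" and r: "r < n"
  shows "(A^^(n * Suc k)) (\<lambda>x. exp (VV \<psi> n (Suc k) ((\<alpha>^^r) x))) x
    \<le> supnorm ((A^^r) (\<lambda>x. 1)) * (supnorm (\<lambda>x. exp (\<psi> x)) * supnorm ((A^^n) (\<lambda>x. exp (\<psi> x))) ^ k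
        * supnorm ((A^^(n - r)) (\<lambda>x. 1)))"
proof -
  define ar where "ar = supnorm ((A^^r) (\<lambda>x. 1))"
  define E where "E = supnorm (\<lambda>x. exp (\<psi> x))"
  define N where "N = supnorm ((A^^n) (\<lambda>x. exp (\<psi> x)))"
  define V where "V = VV \<psi> n (Suc k)"
  have ecx: "(\<lambda>x. exp (\<psi> x)) \<in> CX" using psi by auto
  have VCX: "V \<in> CX" unfolding V_def using psi by auto
  have eVCX: "(\<lambda>x. exp (V x)) \<in> CX" using VCX by auto
  have ar0: "ar \<ge> 0" unfolding ar_def using supnorm_nonneg[OF cpt An_CX[OF CX_const]] .
  have E0: "E \<ge> 0" unfolding E_def using supnorm_nonneg[OF cpt ecx] .
  have N0: "N \<ge> 0" unfolding N_def using supnorm_nonneg[OF cpt An_CX[OF ecx]] .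
  have split: "A^^(n * Suc k) = (A^^(n - r)) \<circ> (A^^(n * k)) \<circ> (A^^r)"
  proof -
    have "n * Suc k = (n - r) + n * k + r" using r by simp
    then show ?thesis by (simp only: funpow_add)
  qed
  have stepa: "(A^^r) (\<lambda>x. exp (V ((\<alpha>^^r) x))) = (\<lambda>x. exp (V x) * (A^^r) (\<lambda>x. 1) x)"
    using hom[OF eVCX CX_const[of 1], of r] by simp
  define G where "G = (\<lambda>x. exp (V x) * (A^^r) (\<lambda>x. 1) x)"
  have GCX: "G \<in> CX" unfolding G_def using eVCX by (intro CX_mult An_CX CX_const)
  have Gle: "G x \<le> ar * exp (V x)" for x
    unfolding G_def ar_def using supnorm_ge'[OF cpt An_CX[OF CX_const[of 1], of r], of x]
    by (simp add: mult.commute mult_left_mono)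
  have stepc: "(A^^(n * k)) (\<lambda>x. exp (V x)) = (\<lambda>x. exp (\<psi> x) * (A^^(n * k)) (\<lambda>x. exp (VV \<psi> n k x)) x)"
  proof -
    have "(\<lambda>x. exp (V x)) = (\<lambda>x. exp (\<psi> ((\<alpha>^^(n * k)) x)) * exp (VV \<psi> n k x))"
      unfolding V_def by (simp add: VV_Suc exp_add mult.commute)
    then show ?thesis using hom[OF ecx CX_exp[OF VV_CX[OF psi]], of "n * k"] by simp
  qed
  define H where "H = (\<lambda>x. exp (\<psi> x) * (A^^(n * k)) (\<lambda>x. exp (VV \<psi> n k x)) x)"
  have HCX: "H \<in> CX" unfolding H_def using psi by (intro CX_mult CX_exp An_CX CX_exp VV_CX) auto
  have Hle: "H x \<le> E * N ^ k" for x
  proof -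
    have "(A^^(n * k)) (\<lambda>x. exp (VV \<psi> n k x)) x \<le> N ^ k" unfolding N_def by (rule Q_bound[OF psi])
    moreover have "exp (\<psi> x) \<le> E" unfolding E_def using supnorm_ge'[OF cpt ecx] .
    moreover have "(A^^(n * k)) (\<lambda>x. exp (VV \<psi> n k x)) x \<ge> 0" using psi by (intro An_nonneg) auto
    ultimately show ?thesis unfolding H_def using E0 by (intro mult_mono) auto
  qed
  have "(A^^(n * Suc k)) (\<lambda>x. exp (VV \<psi> n (Suc k) ((\<alpha>^^r) x))) x = (A^^(n - r)) ((A^^(n * k)) G) x"
    using split stepa unfolding G_def V_def by simp
  also have "\<dots> \<le> (A^^(n - r)) ((A^^(n * k)) (\<lambda>x. ar * exp (V x))) x"
  proof (rule poslin_mono[OF PAn An_CX[OF GCX] An_CX[OF CX_scale[OF eVCX]]])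
    fix y show "(A^^(n * k)) G y \<le> (A^^(n * k)) (\<lambda>x. ar * exp (V x)) y"
      by (rule poslin_mono[OF PAn GCX CX_scale[OF eVCX] Gle])
  qed
  also have "(A^^(n * k)) (\<lambda>x. ar * exp (V x)) = (\<lambda>x. ar * H x)"
    using poslin_scale[OF PAn eVCX, where c = ar] stepc unfolding H_def by simp
  also have "(A^^(n - r)) (\<lambda>x. ar * H x) x = ar * (A^^(n - r)) H x"
    using poslin_scale[OF PAn HCX, where c = ar] by simp
  also have "\<dots> \<le> ar * (E * N ^ k * supnorm ((A^^(n - r)) (\<lambda>x. 1)))"
    using An_le_const[OF HCX Hle] E0 N0 ar0 by (intro mult_left_mono) auto
  finally show ?thesis unfolding ar_def E_def N_def .
qed

end



context sys begin

lemma Pw_block_bound: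
  assumes psi: "\<psi> \<in> CX" and n: "n \<ge> 1"
  defines "C \<equiv> (\<Sum>r<n. supnorm ((A^^r) (\<lambda>x. 1)) * (supnorm (\<lambda>x. exp (\<psi> x)) * supnorm ((A^^(n - r)) (\<lambda>x. 1))))"
  shows "supnorm (Pw (\<lambda>x. \<psi> x / n) (n * Suc k)) \<le> C * supnorm ((A^^n) (\<lambda>x. exp (\<psi> x))) ^ k"
proof -
  define \<phi> where "\<phi> = (\<lambda>x. \<psi> x / real n)"
  have phi: "\<phi> \<in> CX" unfolding \<phi>_def using psi by auto
  define N where "N = supnorm ((A^^n) (\<lambda>x. exp (\<psi> x)))"
  define E where "E = supnorm (\<lambda>x. exp (\<psi> x))"
  define W where "W r x = VV \<psi> n (Suc k) ((\<alpha>^^r) x)" for r x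
  have ecx: "(\<lambda>x. exp (\<psi> x)) \<in> CX" using psi by auto
  have WCX: "(\<lambda>x. exp (W r x)) \<in> CX" for r unfolding W_def using psi by (intro CX_exp CX_alpha VV_CX)
  have N0: "N \<ge> 0" unfolding N_def using supnorm_nonneg[OF cpt An_CX[OF ecx]] .
  have E0: "E \<ge> 0" unfolding E_def using supnorm_nonneg[OF cpt ecx] .
  have Sn_eq: "Sn \<phi> (n * Suc k) x = (\<Sum>r<n. (1 / real n) * W r x)" for x
  proof -
    have "Sn \<phi> (n * Suc k) x = (\<Sum>j<n * Suc k. \<psi> ((\<alpha>^^j) x) / real n)" unfolding Sn_def \<phi>_def ..
    also have "\<dots> = (\<Sum>r<n. \<Sum>i<Suc k. \<psi> ((\<alpha>^^(n * i + r)) x) / real n)" by (rule sum_regroup)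
    also have "\<dots> = (\<Sum>r<n. (1 / real n) * W r x)"
      unfolding W_def VV_def by (simp add: funpow_add sum_divide_distrib add_divide_distrib)
    finally show ?thesis .
  qed
  have jen: "exp (Sn \<phi> (n * Suc k) x) \<le> (\<Sum>r<n. (1 / real n) * exp (W r x))" for x
    unfolding Sn_eq using n by (intro exp_jensen) (auto simp: lessThan_empty_iff)
  have sCX: "(\<lambda>x. \<Sum>r<n. (1 / real n) * exp (W r x)) \<in> CX" using WCX by (intro CX_sum CX_scale)
  have bound: "Pw \<phi> (n * Suc k) x \<le> C * N ^ k" for x
  proof -
    have "Pw \<phi> (n * Suc k) x = (A^^(n * Suc k)) (\<lambda>x. exp (Sn \<phi> (n * Suc k) x)) x"
      using Pw_eq[OF phi] by simp
    also have "\<dots> \<le> (A^^(n * Suc k)) (\<lambda>x. \<Sum>r<n. (1 / real n) * exp (W r x)) x"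
      using Sn_CX[OF phi] sCX jen by (intro poslin_mono[OF PAn]) auto
    also have "\<dots> = (\<Sum>r<n. (A^^(n * Suc k)) (\<lambda>x. (1 / real n) * exp (W r x)) x)"
    proof -
      have "(A^^(n * Suc k)) (\<lambda>x. \<Sum>r<n. (1 / real n) * exp (W r x)) = (\<lambda>x. \<Sum>r<n. (A^^(n * Suc k)) (\<lambda>x. (1 / real n) * exp (W r x)) x)"
        by (rule poslin_sum[OF PAn]) (auto intro!: CX_scale WCX)
      from fun_cong[OF this, of x] show ?thesis .
    qed
    also have "\<dots> = (\<Sum>r<n. (1 / real n) * (A^^(n * Suc k)) (\<lambda>x. exp (W r x)) x)"
      by (intro sum.cong refl) (subst poslin_scale[OF PAn WCX], rule refl)
    also have "\<dots> \<le> (\<Sum>r<n. supnorm ((A^^r) (\<lambda>x. 1)) * (E * N ^ k * supnorm ((A^^(n - r)) (\<lambda>x. 1))))"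
    proof (rule sum_mono)
      fix r assume r: "r \<in> {..<n}"
      have tb: "(A^^(n * Suc k)) (\<lambda>x. exp (W r x)) x \<le> supnorm ((A^^r) (\<lambda>x. 1)) * (E * N ^ k * supnorm ((A^^(n - r)) (\<lambda>x. 1)))"
        unfolding W_def E_def N_def using term_bound[OF psi, of r n k x] r by simp
      have nn: "(A^^(n * Suc k)) (\<lambda>x. exp (W r x)) x \<ge> 0" using WCX by (intro An_nonneg) auto
      have "(1 / real n) * (A^^(n * Suc k)) (\<lambda>x. exp (W r x)) x \<le> (A^^(n * Suc k)) (\<lambda>x. exp (W r x)) x"
        using n nn by (simp add: field_simps mult_le_cancel_right1)
      with tb show "(1 / real n) * (A^^(n * Suc k)) (\<lambda>x. exp (W r x)) x \<le> supnorm ((A^^r) (\<lambda>x. 1)) * (E * N ^ k * supnorm ((A^^(n - r)) (\<lambda>x. 1)))"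
        by linarith
    qed
    also have "\<dots> = C * N ^ k" unfolding C_def E_def by (simp add: sum_distrib_left[symmetric] algebra_simps)
    finally show ?thesis .
  qed
  show ?thesis unfolding \<phi>_def[symmetric] N_def[symmetric]
    using bound Pw_nonneg[OF phi] by (intro supnorm_le_pos) auto
qed

end



context sys begin

lemma lam_scaled:
  assumes psi: "\<psi> \<in> CX" and n: "n \<ge> 1"
  shows "lam (\<lambda>x. \<psi> x / real n) \<le> eln (supnorm ((A^^n) (\<lambda>x. exp (\<psi> x)))) / ereal (real n)"
proof -
  define \<phi> where "\<phi> = (\<lambda>x. \<psi> x / real n)"
  have phi: "\<phi> \<in> CX" unfolding \<phi>_def using psi by auto
  define N where "N = supnorm ((A^^n) (\<lambda>x. exp (\<psi> x)))"
  have ecx: "(\<lambda>x. exp (\<psi> x)) \<in> CX" using psi by auto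
  have N0: "N \<ge> 0" unfolding N_def using supnorm_nonneg[OF cpt An_CX[OF ecx]] .
  obtain C where C: "\<And>k. supnorm (Pw \<phi> (n * Suc k)) \<le> C * N ^ k"
    using Pw_block_bound[OF psi n] unfolding \<phi>_def[symmetric] N_def[symmetric] by blast
  have C0: "C \<ge> 0" using C[of 0] supnorm_nonneg[OF cpt Pw_CX[OF phi], of "n * Suc 0"] by simp
  have lamle: "lam \<phi> \<le> aa \<phi> (n * Suc k) / ereal (real (n * Suc k))" for k
    using n by (intro lam_le) simp
  have "lam \<phi> \<le> eln N / ereal (real n)"
  proof (cases "N = 0")
    case True
    have "supnorm (Pw \<phi> (n * Suc 1)) \<le> 0" using C[of 1] True by simp
    then have "supnorm (Pw \<phi> (n * Suc 1)) = 0" using supnorm_nonneg[OF cpt Pw_CX[OF phi]] by (simp add: order_antisym)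
    then have "aa \<phi> (n * Suc 1) = -\<infinity>" unfolding aa_def by (simp add: eln_def)
    then have "lam \<phi> = -\<infinity>" using lamle[of 1] n by simp
    then show ?thesis by simp
  next
    case False
    then have Npos: "N > 0" using N0 by simp
    define b where "b k = (ln (C + 1) + real k * ln N) / (real n * real (Suc k))" for k
    have lamb: "lam \<phi> \<le> ereal (b k)" for k
    proof -
      have "aa \<phi> (n * Suc k) \<le> ereal (ln (C + 1) + real k * ln N)"
      proof (cases "supnorm (Pw \<phi> (n * Suc k)) > 0")
        case True
        have "supnorm (Pw \<phi> (n * Suc k)) \<le> (C + 1) * N ^ k"
        proof -
          have "C * N ^ k \<le> (C + 1) * N ^ k" using Npos by (intro mult_right_mono) auto
          then show ?thesis using C[of k] by linarith
        qed
        then have "ln (supnorm (Pw \<phi> (n * Suc k))) \<le> ln ((C + 1) * N ^ k)"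
          using True by (subst ln_le_cancel_iff) auto
        also have "\<dots> = ln (C + 1) + real k * ln N" using C0 Npos by (simp add: ln_mult ln_realpow)
        finally show ?thesis unfolding aa_def using True by (simp add: eln_pos)
      next
        case False then show ?thesis unfolding aa_def by (simp add: eln_def)
      qed
      then have "aa \<phi> (n * Suc k) / ereal (real (n * Suc k)) \<le> ereal (ln (C + 1) + real k * ln N) / ereal (real (n * Suc k))"
        using n by (intro ereal_divide_right_mono) (auto simp: add_pos_nonneg)
      also have "\<dots> = ereal (b k)"
      proof -
        have "real (n * Suc k) = real n * real (Suc k)" by (simp only: of_nat_mult)
        moreover have "real n * real (Suc k) \<noteq> 0" using n by simp
        ultimately show ?thesis unfolding b_def by (simp only: ereal_divide) simp
      qed
      finally show ?thesis using lamle[of k] by simp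
    qed
    have blim: "b \<longlonglongrightarrow> ln N / real n"
    proof -
      have beq: "b k = ((ln (C + 1) - ln N) / real n) / real (Suc k) + ln N / real n" for k
      proof -
        have np: "real n > 0" using n by simp
        have sp: "real (Suc k) > 0" by simp
        have "((ln (C + 1) - ln N) / real n) / real (Suc k) + ln N / real n
            = ((ln (C + 1) - ln N) + ln N * real (Suc k)) / (real n * real (Suc k))"
          using np sp by (simp add: add_divide_distrib divide_divide_eq_left mult.commute)
        also have "(ln (C + 1) - ln N) + ln N * real (Suc k) = ln (C + 1) + real k * ln N"
          by (simp add: algebra_simps)
        finally show ?thesis unfolding b_def by simp
      qed
      have "(\<lambda>k. ((ln (C + 1) - ln N) / real n) / real (Suc k)) \<longlonglongrightarrow> 0"
        using LIMSEQ_Suc[OF lim_const_over_n[of "(ln (C + 1) - ln N) / real n"]] by simp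
      then have "(\<lambda>k. ((ln (C + 1) - ln N) / real n) / real (Suc k) + ln N / real n) \<longlonglongrightarrow> 0 + ln N / real n"
        by (intro tendsto_add tendsto_const)
      then show ?thesis unfolding beq[abs_def] by simp
    qed
    show "lam \<phi> \<le> eln N / ereal (real n)"
    proof (cases "lam \<phi>")
      case (real l)
      have "l \<le> ln N / real n" using blim lamb real by (intro LIMSEQ_le_const[OF blim]) auto
      then show ?thesis using real Npos n by (simp add: eln_pos ereal_divide)
    next
      case PInf then show ?thesis using lamb[of 0] by simp
    next
      case MInf then show ?thesis by simp
    qed
  qed
  then show ?thesis unfolding \<phi>_def N_def .
qed

end



lemma finite_bolzano:
  fixes v :: "nat \<Rightarrow> 'b \<Rightarrow> real"
  assumes "finite S" "\<And>j g. g \<in> S \<Longrightarrow> \<bar>v j g\<bar> \<le> B g"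
  shows "\<exists>r. strict_mono r \<and> (\<forall>g\<in>S. convergent (\<lambda>j. v (r j) g))"
  using assms
proof (induction S rule: finite_induct)
  case empty
  show ?case by (intro exI[of _ id]) (auto simp: strict_mono_def)
next
  case (insert a S)
  obtain r where r: "strict_mono r" "\<forall>g\<in>S. convergent (\<lambda>j. v (r j) g)" using insert by auto
  have "bounded (range (\<lambda>j. v (r j) a))"
    unfolding bounded_iff using insert.prems[of a] by (intro exI[of _ "B a"]) auto
  then obtain l r2 where r2: "strict_mono r2" "((\<lambda>j. v (r j) a) \<circ> r2) \<longlonglongrightarrow> l"
    using bounded_imp_convergent_subsequence by blast
  have "strict_mono (r \<circ> r2)" using r(1) r2(1) by (rule strict_mono_o)
  moreover have "convergent (\<lambda>j. v ((r \<circ> r2) j) g)" if "g \<in> insert a S" for g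
  proof (cases "g = a")
    case True then show ?thesis using r2(2) by (auto simp: convergent_def o_def)
  next
    case False
    then have "convergent (\<lambda>j. v (r j) g)" using r(2) that by auto
    from convergent_subseq_convergent[OF this r2(1)] show ?thesis by (simp add: o_def)
  qed
  ultimately show ?case by blast
qed

lemma ln_quad_lower:
  fixes z :: real
  assumes "\<bar>z\<bar> \<le> 1/2"
  shows "z - 2 * z\<^sup>2 \<le> ln (1 + z)"
proof (cases "z \<ge> 0")
  case True
  have "z - z\<^sup>2 \<le> ln (1 + z)" using True assms by (intro ln_one_plus_pos_lower_bound) auto
  moreover have "z - 2 * z\<^sup>2 \<le> z - z\<^sup>2" by simp
  ultimately show ?thesis by linarith
next
  case False
  have "- (-z) - 2 * (-z)\<^sup>2 \<le> ln (1 - (-z))" using False assms by (intro ln_one_minus_pos_lower_bound) auto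
  then show ?thesis by simp
qed

lemma deriv_ineq:
  fixes c y :: "'b \<Rightarrow> real"
  assumes fin: "finite S" and c: "\<And>g. g \<in> S \<Longrightarrow> c g \<ge> 0" and y: "\<And>g. g \<in> S \<Longrightarrow> y g \<ge> 0"
    and H: "\<And>t. 0 < t \<Longrightarrow> t \<le> 1/2 \<Longrightarrow> (\<Sum>g\<in>S. c g * ln (1 + t * (y g - 1))) \<le> 0"
  shows "(\<Sum>g\<in>S. c g * y g) \<le> (\<Sum>g\<in>S. c g)"
proof (rule ccontr)
  assume neg: "\<not> (\<Sum>g\<in>S. c g * y g) \<le> (\<Sum>g\<in>S. c g)"
  define a where "a = (\<Sum>g\<in>S. c g * (y g - 1))"
  have apos: "a > 0" using neg unfolding a_def by (simp add: algebra_simps sum_subtractf)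
  define b where "b = (\<Sum>g\<in>S. c g * (y g - 1)\<^sup>2)"
  have b0: "b \<ge> 0" unfolding b_def using c by (intro sum_nonneg) auto
  define Y where "Y = (\<Sum>g\<in>S. y g + 1)"
  have yY: "\<bar>y g - 1\<bar> \<le> Y" if "g \<in> S" for g
  proof -
    have "y g + 1 \<le> Y" unfolding Y_def using fin that y by (intro member_le_sum) (auto intro: add_nonneg_nonneg)
    then show ?thesis using y[OF that] by auto
  qed
  define t where "t = min (1 / (2 * Y + 2)) (min (1/2) (a / (4 * b + 1)))"
  have Y0: "Y \<ge> 0" unfolding Y_def using y by (intro sum_nonneg) (auto intro: add_nonneg_nonneg)
  have tpos: "t > 0" unfolding t_def using Y0 apos b0 by auto
  have th: "t \<le> 1/2" unfolding t_def by (metis min.cobounded1 min.cobounded2 order_trans)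
  have tY: "t \<le> 1 / (2 * Y + 2)" unfolding t_def by (rule min.cobounded1)
  have ta: "t \<le> a / (4 * b + 1)" unfolding t_def by (metis min.cobounded2 order_trans)
  have tz: "\<bar>t * (y g - 1)\<bar> \<le> 1/2" if "g \<in> S" for g
  proof -
    have "\<bar>t * (y g - 1)\<bar> = t * \<bar>y g - 1\<bar>" using tpos by (simp add: abs_mult)
    also have "\<dots> \<le> (1 / (2 * Y + 2)) * (Y + 1)"
      using yY[OF that] tpos Y0 tY by (intro mult_mono) auto
    also have "\<dots> = 1/2" using Y0 by (simp add: field_simps)
    finally show ?thesis .
  qed
  have "(\<Sum>g\<in>S. c g * (t * (y g - 1) - 2 * (t * (y g - 1))\<^sup>2)) \<le> (\<Sum>g\<in>S. c g * ln (1 + t * (y g - 1)))"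
    using tz c by (intro sum_mono mult_left_mono ln_quad_lower) auto
  also have "\<dots> \<le> 0" using H[OF tpos th] .
  finally have "(\<Sum>g\<in>S. c g * (t * (y g - 1) - 2 * (t * (y g - 1))\<^sup>2)) \<le> 0" .
  moreover have "(\<Sum>g\<in>S. c g * (t * (y g - 1) - 2 * (t * (y g - 1))\<^sup>2)) = t * a - 2 * t\<^sup>2 * b"
  proof -
    have "c g * (t * (y g - 1) - 2 * (t * (y g - 1))\<^sup>2) = t * (c g * (y g - 1)) - 2 * t\<^sup>2 * (c g * (y g - 1)\<^sup>2)" for g
      by (simp add: algebra_simps power2_eq_square)
    then show ?thesis unfolding a_def b_def by (simp add: sum_subtractf sum_distrib_left)
  qed
  ultimately have "t * a \<le> 2 * t\<^sup>2 * b" by simp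
  then have "a \<le> 2 * t * b" using tpos by (simp add: power2_eq_square field_simps)
  moreover have "2 * t * b < a"
  proof -
    from ta have "2 * t * b \<le> 2 * (a / (4 * b + 1)) * b" using b0 by (intro mult_right_mono) auto
    also have "\<dots> < a" using apos b0 by (simp add: field_simps add_pos_nonneg)
    finally show ?thesis .
  qed
  ultimately show False by simp
qed

lemma tau_sum_value:
  fixes c x :: "'b \<Rightarrow> real"
  assumes fin: "finite D" and c: "\<And>g. g \<in> D \<Longrightarrow> c g \<ge> 0" and x: "\<And>g. g \<in> D \<Longrightarrow> x g \<ge> 0"
  defines "S \<equiv> {g\<in>D. c g \<noteq> 0}"
  shows "(\<Sum>g\<in>D. (if c g = 0 then 0 else ereal (c g) * eln (x g / c g))) =
    (if \<forall>g\<in>S. x g > 0 then ereal (\<Sum>g\<in>S. c g * ln (x g / c g)) else -\<infinity>)"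
proof -
  define t where "t g = (if c g = 0 then 0 else ereal (c g) * eln (x g / c g))" for g
  have cpos: "c g > 0" if "g \<in> S" for g using that c unfolding S_def by force
  have tfin: "t g \<noteq> \<infinity>" if "g \<in> D" for g using c[OF that] unfolding t_def by (auto simp: eln_def)
  show ?thesis
  proof (cases "\<forall>g\<in>S. x g > 0")
    case True
    have "(\<Sum>g\<in>D. t g) = (\<Sum>g\<in>S. t g)"
      unfolding S_def using fin by (intro sum.mono_neutral_right) (auto simp: t_def)
    also have "\<dots> = (\<Sum>g\<in>S. ereal (c g * ln (x g / c g)))"
      using cpos True unfolding t_def by (intro sum.cong refl) (auto simp: tau_term_pos)
    also have "\<dots> = ereal (\<Sum>g\<in>S. c g * ln (x g / c g))" by (rule sum_ereal)
    finally show ?thesis using True unfolding t_def by simp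
  next
    case False
    then obtain g0 where g0: "g0 \<in> S" "x g0 \<le> 0" by (auto simp: not_less)
    have "t g0 = -\<infinity>" using g0 cpos[OF g0(1)] unfolding t_def S_def
      by (simp add: tau_term_zero divide_nonpos_pos)
    then have "(\<Sum>g\<in>D. t g) = -\<infinity>" using g0(1) fin tfin unfolding S_def by (intro ereal_sum_minf) auto
    then show ?thesis using False unfolding t_def by simp
  qed
qed



context sys begin

lemma caseA:
  assumes mu: "\<mu> \<in> states" and D: "partition_of_unity D" and g0: "g0 \<in> D" "\<mu> g0 > 0"
    and hz: "\<And>x. (A^^n) g0 x = 0"
  shows "\<exists>\<psi>\<in>CX. eln (supnorm ((A^^n) (\<lambda>x. exp (\<psi> x)))) - ereal (\<mu> \<psi>) < ereal K"
proof -
  note fin = part_facts(1)[OF D] and DCX = part_facts(2)[OF D] and gnn = part_facts(3)[OF D]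
    and gsum = part_facts(4)[OF D]
  have g0CX: "g0 \<in> CX" using DCX[OF g0(1)] .
  have g01: "g0 x \<le> 1" for x
  proof -
    have "g0 x \<le> (\<Sum>g\<in>D. g x)" using fin g0(1) gnn by (intro member_le_sum) auto
    then show ?thesis using gsum[of x] by simp
  qed
  define B1 where "B1 = supnorm ((A^^n) (\<lambda>x. 1))"
  define t where "t = (\<bar>ln B1\<bar> + \<bar>K\<bar> + 1) / \<mu> g0"
  have t0: "t \<ge> 0" unfolding t_def using g0(2) by simp
  define \<psi> where "\<psi> = (\<lambda>x. t * g0 x)"
  have psi: "\<psi> \<in> CX" unfolding \<psi>_def using g0CX by auto
  have ecx: "(\<lambda>x. exp (\<psi> x)) \<in> CX" using psi by auto
  have lin: "(\<lambda>x. 1 + (exp t - 1) * g0 x) \<in> CX" using g0CX by auto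
  have ptw: "exp (\<psi> x) \<le> 1 + (exp t - 1) * g0 x" for x
  proof -
    have "exp ((1 - g0 x) *\<^sub>R 0 + g0 x *\<^sub>R t) \<le> (1 - g0 x) * exp 0 + g0 x * exp t"
      using gnn[OF g0(1), of x] g01[of x] by (intro convex_onD[OF exp_convex]) auto
    then show ?thesis unfolding \<psi>_def by (simp add: algebra_simps)
  qed
  have Ale: "(A^^n) (\<lambda>x. exp (\<psi> x)) x \<le> B1" for x
  proof -
    have "(A^^n) (\<lambda>x. exp (\<psi> x)) x \<le> (A^^n) (\<lambda>x. 1 + (exp t - 1) * g0 x) x"
      by (rule poslin_mono[OF PAn ecx lin ptw])
    also have "(A^^n) (\<lambda>x. 1 + (exp t - 1) * g0 x) = (\<lambda>x. (A^^n) (\<lambda>x. 1) x + (A^^n) (\<lambda>x. (exp t - 1) * g0 x) x)"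
      using g0CX by (intro poslin_add[OF PAn]) auto
    also have "(A^^n) (\<lambda>x. (exp t - 1) * g0 x) = (\<lambda>x. (exp t - 1) * (A^^n) g0 x)"
      by (rule poslin_scale[OF PAn g0CX])
    finally have "(A^^n) (\<lambda>x. exp (\<psi> x)) x \<le> (A^^n) (\<lambda>x. 1) x" using hz by simp
    also have "\<dots> \<le> B1" unfolding B1_def using supnorm_ge'[OF cpt An_CX[OF CX_const]] .
    finally show ?thesis .
  qed
  define N where "N = supnorm ((A^^n) (\<lambda>x. exp (\<psi> x)))"
  have NB: "N \<le> B1" unfolding N_def using Ale An_nonneg[OF ecx] by (intro supnorm_le_pos) auto
  have mupsi: "\<mu> \<psi> = t * \<mu> g0" unfolding \<psi>_def using states_scale[OF mu g0CX] .
  have tmu: "t * \<mu> g0 = \<bar>ln B1\<bar> + \<bar>K\<bar> + 1" unfolding t_def using g0(2) by simp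
  have "eln N - ereal (\<mu> \<psi>) < ereal K"
  proof (cases "N > 0")
    case True
    have "ln N \<le> ln B1" using True NB by simp
    then have "ln N - \<mu> \<psi> < K" using mupsi tmu by linarith
    then show ?thesis using True by (simp add: eln_pos)
  next
    case False then show ?thesis by (simp add: eln_def)
  qed
  then show ?thesis using psi unfolding N_def by blast
qed

end



lemma f_tendsto:
  fixes w :: "nat \<Rightarrow> 'b \<Rightarrow> real"
  assumes "\<And>g. g \<in> S \<Longrightarrow> (\<lambda>j. w j g) \<longlonglongrightarrow> ws g" "\<And>g. g \<in> S \<Longrightarrow> ws g > 0" "\<And>g. g \<in> S \<Longrightarrow> c g > 0"
  shows "(\<lambda>j. \<Sum>g\<in>S. c g * ln (w j g / c g)) \<longlonglongrightarrow> (\<Sum>g\<in>S. c g * ln (ws g / c g))"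
proof (intro tendsto_sum tendsto_mult tendsto_const tendsto_ln tendsto_divide)
  fix g assume g: "g \<in> S"
  show "(\<lambda>j. w j g) \<longlonglongrightarrow> ws g" using assms(1)[OF g] .
  show "c g \<noteq> 0" using assms(3)[OF g] by simp
  show "ws g / c g \<noteq> 0" using assms(2,3)[OF g] by simp
qed

context sys begin

lemma caseB:
  assumes mu: "\<mu> \<in> states" and D: "partition_of_unity D" and T: "tau_nD A \<mu> n D = ereal Tr"
    and TK: "Tr < K"
  shows "\<exists>\<psi>\<in>CX. eln (supnorm ((A^^n) (\<lambda>x. exp (\<psi> x)))) - ereal (\<mu> \<psi>) < ereal K"
proof -
  note fin = part_facts(1)[OF D] and DCX = part_facts(2)[OF D] and gnn = part_facts(3)[OF D]
    and gsum = part_facts(4)[OF D]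
  define c where "c g = \<mu> g" for g
  define S where "S = {g\<in>D. c g \<noteq> 0}"
  define h where "h g = (A^^n) g" for g
  have SD: "S \<subseteq> D" unfolding S_def by auto
  have finS: "finite S" using fin SD by (rule finite_subset[rotated])
  have cnn: "c g \<ge> 0" if "g \<in> D" for g unfolding c_def using states_pos[OF mu DCX[OF that] gnn[OF that]] .
  have cpos: "c g > 0" if "g \<in> S" for g using that cnn unfolding S_def by force
  have csum: "sum c D = 1" unfolding c_def using mu_part_sum[OF mu D] .
  have "sum c S = sum c D" using fin unfolding S_def by (intro sum.mono_neutral_left) auto
  then have cS: "sum c S = 1" using csum by simp
  have Sne: "S \<noteq> {}" using cS by auto
  have hCX: "h g \<in> CX" if "g \<in> D" for g unfolding h_def using DCX[OF that] by auto
  have hnn: "h g x \<ge> 0" if "g \<in> D" for g x unfolding h_def using An_nonneg[OF DCX[OF that] gnn[OF that]] .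
  define F where "F m = (\<Sum>g\<in>D. (if c g = 0 then 0 else ereal (c g) * eln (m (h g) / c g)))" for m :: "('a \<Rightarrow> real) \<Rightarrow> real"
  define f where "f v = (\<Sum>g\<in>S. c g * ln (v g / c g))" for v :: "('a \<Rightarrow> real) \<Rightarrow> real"
  have tau_eq: "tau_nD A \<mu> n D = (SUP m\<in>states. F m)" unfolding tau_nD_def F_def c_def h_def ..
  have mhnn: "m (h g) \<ge> 0" if "m \<in> states" "g \<in> D" for m g
    using states_pos[OF that(1) hCX[OF that(2)] hnn[OF that(2)]] .
  have Fval: "F m = (if \<forall>g\<in>S. m (h g) > 0 then ereal (f (\<lambda>g. m (h g))) else -\<infinity>)" if m: "m \<in> states" for m
    unfolding F_def f_def S_def using tau_sum_value[OF fin, of c "\<lambda>g. m (h g)"] cnn mhnn[OF m] by simp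
  have FleT: "F m \<le> ereal Tr" if "m \<in> states" for m using T that unfolding tau_eq by (metis SUP_upper)
  have fle: "f (\<lambda>g. m (h g)) \<le> Tr" if m: "m \<in> states" "\<forall>g\<in>S. m (h g) > 0" for m
    using FleT[OF m(1)] Fval[OF m(1)] m(2) by simp
  define H where "H g = supnorm (h g)" for g
  have mH: "m (h g) \<le> H g" if "m \<in> states" "g \<in> D" for m g
    unfolding H_def using states_le_norm[OF cpt that(1) hCX[OF that(2)]] .
  have "\<exists>m\<in>states. ereal (Tr - 1 / real (Suc j)) < F m" for j
  proof -
    have "ereal (Tr - 1 / real (Suc j)) < ereal Tr" by simp
    then show ?thesis unfolding T[symmetric] tau_eq by (simp add: less_SUP_iff)
  qed
  then obtain ms where ms: "\<And>j. ms j \<in> states" "\<And>j. ereal (Tr - 1 / real (Suc j)) < F (ms j)" by metis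
  define v where "v j g = ms j (h g)" for j g
  have vpos: "v j g > 0" if "g \<in> S" for j g
  proof (rule ccontr)
    assume "\<not> v j g > 0"
    then have "F (ms j) = -\<infinity>" using Fval[OF ms(1)[of j]] that unfolding v_def by auto
    then show False using ms(2)[of j] by simp
  qed
  have fv: "Tr - 1 / real (Suc j) < f (v j)" for j
    using ms(2)[of j] Fval[OF ms(1)[of j]] vpos unfolding v_def[abs_def] by (simp add: v_def)
  have fvle: "f (v j) \<le> Tr" for j using fle[OF ms(1)] vpos unfolding v_def[abs_def] by (simp add: v_def)
  have vH: "v j g \<le> H g" if "g \<in> D" for j g unfolding v_def using mH[OF ms(1) that] .
  have Hpos: "H g > 0" if "g \<in> S" for g using vpos[OF that, of 0] vH[of g 0] that SD by force
  define L where "L g = Tr - 1 - (\<Sum>g'\<in>S - {g}. c g' * ln (H g' / c g'))" for g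
  define \<delta> where "\<delta> g = c g * exp (L g / c g)" for g
  have dpos: "\<delta> g > 0" if "g \<in> S" for g unfolding \<delta>_def using cpos[OF that] by simp
  have vdelta: "v j g \<ge> \<delta> g" if g: "g \<in> S" for j g
  proof -
    have "f (v j) = c g * ln (v j g / c g) + (\<Sum>g'\<in>S - {g}. c g' * ln (v j g' / c g'))"
      unfolding f_def using finS g by (simp add: sum.remove)
    moreover have "(\<Sum>g'\<in>S - {g}. c g' * ln (v j g' / c g')) \<le> (\<Sum>g'\<in>S - {g}. c g' * ln (H g' / c g'))"
    proof (intro sum_mono mult_left_mono)
      fix g' assume g': "g' \<in> S - {g}"
      then have "g' \<in> S" by simp
      then have a: "v j g' > 0" "v j g' \<le> H g'" "c g' > 0" using vpos[of g' j] vH[of g' j] cpos[of g'] SD by auto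
      then have "v j g' / c g' \<le> H g' / c g'" by (intro divide_right_mono) auto
      then show "ln (v j g' / c g') \<le> ln (H g' / c g')" using a by (subst ln_le_cancel_iff) auto
      show "0 \<le> c g'" using cpos[of g'] \<open>g' \<in> S\<close> by simp
    qed
    moreover have "Tr - 1 \<le> Tr - 1 / real (Suc j)" by (simp add: field_simps)
    ultimately have "L g \<le> c g * ln (v j g / c g)" unfolding L_def using fv[of j] by linarith
    then have "L g / c g \<le> ln (v j g / c g)" using cpos[OF g] by (simp add: field_simps)
    then have "exp (L g / c g) \<le> v j g / c g" using vpos[OF g] cpos[OF g]
      by (metis divide_pos_pos exp_le_cancel_iff exp_ln)
    then show ?thesis unfolding \<delta>_def using cpos[OF g] by (simp add: field_simps)
  qed
  obtain r where r: "strict_mono r" "\<forall>g\<in>S. convergent (\<lambda>j. v (r j) g)"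
    using finite_bolzano[OF finS, of v H] vpos vH SD by (force simp: less_imp_le)
  define vs where "vs g = lim (\<lambda>j. v (r j) g)" for g
  have vlim: "(\<lambda>j. v (r j) g) \<longlonglongrightarrow> vs g" if "g \<in> S" for g
    using r(2) that unfolding vs_def convergent_LIMSEQ_iff by blast
  have vsd: "vs g \<ge> \<delta> g" if "g \<in> S" for g
    by (rule LIMSEQ_le_const[OF vlim[OF that]]) (use vdelta[OF that] in auto)
  have vspos: "vs g > 0" if "g \<in> S" for g using vsd[OF that] dpos[OF that] by simp
  have flim: "(\<lambda>j. f (v (r j))) \<longlonglongrightarrow> f vs"
    unfolding f_def by (rule f_tendsto) (use vlim vspos cpos in auto)
  have fvs_le: "f vs \<le> Tr" by (rule LIMSEQ_le_const2[OF flim]) (use fvle in auto)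
  have fvs_ge: "Tr \<le> f vs"
  proof (rule field_le_epsilon)
    fix e :: real assume e: "e > 0"
    define N where "N = nat (ceiling (1 / e))"
    have "Tr - e \<le> f vs"
    proof (rule LIMSEQ_le_const[OF flim], intro exI allI impI)
      fix j assume j: "j \<ge> N"
      have "1 / e \<le> real N" unfolding N_def by linarith
      also have "\<dots> \<le> real (Suc (r j))" using seq_suble[OF r(1), of j] j by simp
      finally have "1 / real (Suc (r j)) \<le> e" using e by (simp add: field_simps)
      then show "Tr - e \<le> f (v (r j))" using fv[of "r j"] by linarith
    qed
    then show "Tr \<le> f vs + e" by simp
  qed
  have fvs: "f vs = Tr" using fvs_le fvs_ge by simp
  have opt: "(\<Sum>g\<in>S. c g * (m (h g) / vs g)) \<le> 1" if m: "m \<in> states" for m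
  proof -
    define y where "y g = m (h g) / vs g" for g
    have ynn: "y g \<ge> 0" if "g \<in> S" for g
      unfolding y_def using mhnn[OF m] vspos[OF that] that SD by (auto intro!: divide_nonneg_pos)
    have Hd: "(\<Sum>g\<in>S. c g * ln (1 + t * (y g - 1))) \<le> 0" if t: "0 < t" "t \<le> 1/2" for t
    proof -
      define ws where "ws g = (1 - t) * vs g + t * m (h g)" for g
      define w where "w j g = (1 - t) * v (r j) g + t * m (h g)" for j g
      have mhS: "m (h g) \<ge> 0" if "g \<in> S" for g using mhnn[OF m] that SD by auto
      have wpos: "w j g > 0" if "g \<in> S" for j g
        unfolding w_def using vpos[OF that, of "r j"] mhS[OF that] t by (intro add_pos_nonneg) auto
      have wspos: "ws g > 0" if "g \<in> S" for g
        unfolding ws_def using vspos[OF that] mhS[OF that] t by (intro add_pos_nonneg) auto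
      have fw: "f (w j) \<le> Tr" for j
      proof -
        have wst: "(\<lambda>\<phi>. (1 - t) * ms (r j) \<phi> + t * m \<phi>) \<in> states"
          by (rule convex_states[OF ms(1) m]) (use t in auto)
        have eqp: "(1 - t) * ms (r j) (h g) + t * m (h g) = w j g" for g unfolding w_def v_def by simp
        show ?thesis using fle[OF wst] wpos unfolding eqp by simp
      qed
      have wlim: "(\<lambda>j. w j g) \<longlonglongrightarrow> ws g" if "g \<in> S" for g
        unfolding w_def ws_def by (intro tendsto_intros vlim[OF that])
      have fwlim: "(\<lambda>j. f (w j)) \<longlonglongrightarrow> f ws"
        unfolding f_def by (rule f_tendsto) (use wlim wspos cpos in auto)
      have fws: "f ws \<le> Tr" by (rule LIMSEQ_le_const2[OF fwlim]) (use fw in auto)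
      have trm: "c g * ln (ws g / c g) - c g * ln (vs g / c g) = c g * ln (1 + t * (y g - 1))" if g: "g \<in> S" for g
      proof -
        have wsv: "ws g = vs g * (1 + t * (y g - 1))" unfolding ws_def y_def using vspos[OF g] by (simp add: field_simps)
        have p1: "1 + t * (y g - 1) > 0" using wsv wspos[OF g] vspos[OF g] by (simp add: zero_less_mult_iff)
        have "ln (ws g / c g) = ln (vs g / c g) + ln (1 + t * (y g - 1))"
          using wsv vspos[OF g] cpos[OF g] p1 by (simp add: ln_div ln_mult)
        then show ?thesis by (simp add: algebra_simps)
      qed
      have "f ws - f vs = (\<Sum>g\<in>S. c g * ln (1 + t * (y g - 1)))"
        unfolding f_def by (simp add: sum_subtractf[symmetric] trm)
      then show ?thesis using fws fvs by simp
    qed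
    have "(\<Sum>g\<in>S. c g * y g) \<le> (\<Sum>g\<in>S. c g)"
      by (rule deriv_ineq[OF finS _ ynn Hd]) (use cpos in \<open>auto intro: less_imp_le\<close>)
    then show ?thesis using cS unfolding y_def by simp
  qed
  have Hnn: "H g \<ge> 0" if "g \<in> D" for g unfolding H_def using supnorm_nonneg[OF cpt hCX[OF that]] .
  define HS where "HS = (\<Sum>g\<in>D. H g)"
  have HS0: "HS \<ge> 0" unfolding HS_def using Hnn by (intro sum_nonneg) auto
  define \<epsilon> where "\<epsilon> = (exp (K - Tr) - 1) / (HS + 1)"
  have eK: "exp (K - Tr) > 1" using TK by simp
  have epos: "\<epsilon> > 0" unfolding \<epsilon>_def using eK HS0 by simp
  have eHS: "1 + \<epsilon> * HS < exp (K - Tr)"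
  proof -
    have "\<epsilon> * HS = (exp (K - Tr) - 1) * (HS / (HS + 1))" unfolding \<epsilon>_def by simp
    also have "\<dots> < (exp (K - Tr) - 1) * 1" using eK HS0 by (intro mult_strict_left_mono) auto
    finally show ?thesis by simp
  qed
  define w where "w g = (if g \<in> S then c g / vs g else \<epsilon>)" for g
  have wpos: "w g > 0" for g unfolding w_def using cpos vspos epos by simp
  define G where "G x = (\<Sum>g\<in>D. w g * g x)" for x
  have GCX: "G \<in> CX" unfolding G_def[abs_def] by (intro CX_sum CX_scale DCX)
  have Dne: "D \<noteq> {}" using Sne SD by auto
  define wm where "wm = Min (w ` D)"
  have wm: "wm > 0" unfolding wm_def using fin Dne wpos by (simp add: Min_gr_iff)
  have wmle: "wm \<le> w g" if "g \<in> D" for g unfolding wm_def using fin that by simp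
  have Gge: "G x \<ge> wm" for x
  proof -
    have "wm = (\<Sum>g\<in>D. wm * g x)" using gsum[of x] by (simp add: sum_distrib_left[symmetric])
    also have "\<dots> \<le> G x" unfolding G_def using wmle gnn by (intro sum_mono mult_right_mono) auto
    finally show ?thesis .
  qed
  have Gpos: "G x > 0" for x using Gge[of x] wm by simp
  define \<psi> where "\<psi> x = ln (G x)" for x
  have psi: "\<psi> \<in> CX" unfolding \<psi>_def[abs_def] using GCX Gpos by (intro CX_ln)
  have eG: "(\<lambda>x. exp (\<psi> x)) = G" unfolding \<psi>_def using Gpos by simp
  have AG: "(A^^n) G = (\<lambda>x. \<Sum>g\<in>D. w g * h g x)"
  proof -
    have "(A^^n) G = (\<lambda>x. \<Sum>g\<in>D. (A^^n) (\<lambda>x. w g * g x) x)"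
      unfolding G_def[abs_def] by (rule poslin_sum[OF PAn fin]) (rule CX_scale[OF DCX])
    also have "\<dots> = (\<lambda>x. \<Sum>g\<in>D. w g * h g x)" unfolding h_def using poslin_scale[OF PAn DCX] by simp
    finally show ?thesis .
  qed
  have AGle: "(A^^n) G x \<le> 1 + \<epsilon> * HS" for x
  proof -
    have "(A^^n) G x = (\<Sum>g\<in>D - S. w g * h g x) + (\<Sum>g\<in>S. w g * h g x)"
      unfolding AG using sum.subset_diff[OF SD fin] by simp
    moreover have "(\<Sum>g\<in>S. w g * h g x) \<le> 1"
    proof -
      have "(\<Sum>g\<in>S. w g * h g x) = (\<Sum>g\<in>S. c g * ((\<lambda>f. f x) (h g) / vs g))"
        unfolding w_def by (intro sum.cong refl) simp
      also have "\<dots> \<le> 1" by (rule opt[OF eval_states])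
      finally show ?thesis .
    qed
    moreover have "(\<Sum>g\<in>D - S. w g * h g x) \<le> \<epsilon> * HS"
    proof -
      have "(\<Sum>g\<in>D - S. w g * h g x) \<le> (\<Sum>g\<in>D - S. \<epsilon> * H g)"
        unfolding w_def H_def using supnorm_ge'[OF cpt hCX] epos
        by (intro sum_mono) (auto intro!: mult_left_mono)
      also have "\<dots> \<le> (\<Sum>g\<in>D. \<epsilon> * H g)" using fin Hnn epos by (intro sum_mono2) auto
      also have "\<dots> = \<epsilon> * HS" unfolding HS_def by (simp add: sum_distrib_left)
      finally show ?thesis .
    qed
    ultimately show ?thesis by linarith
  qed
  define N where "N = supnorm ((A^^n) (\<lambda>x. exp (\<psi> x)))"
  have Gnn: "0 \<le> G x" for x using Gpos[of x] by simp
  have NB: "N \<le> 1 + \<epsilon> * HS" unfolding N_def eG using AGle An_nonneg[OF GCX Gnn]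
    by (intro supnorm_le_pos) auto
  have mupsi: "\<mu> \<psi> \<ge> - Tr"
  proof -
    have pt: "(\<Sum>g\<in>D. ln (w g) * g x) \<le> \<psi> x" for x
    proof -
      have "(\<Sum>g\<in>D. g x * ln (w g)) \<le> ln (\<Sum>g\<in>D. g x * w g)"
        using fin gnn wpos gsum[of x] by (intro ln_sum_ge) auto
      then show ?thesis unfolding \<psi>_def G_def by (simp add: mult.commute)
    qed
    have lCX: "(\<lambda>x. \<Sum>g\<in>D. ln (w g) * g x) \<in> CX" by (intro CX_sum CX_scale DCX)
    have "\<mu> (\<lambda>x. \<Sum>g\<in>D. ln (w g) * g x) = (\<Sum>g\<in>D. \<mu> (\<lambda>x. ln (w g) * g x))"
      by (rule states_sum[OF mu fin]) (rule CX_scale[OF DCX])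
    also have "\<dots> = (\<Sum>g\<in>D. ln (w g) * c g)" unfolding c_def
      by (intro sum.cong refl) (rule states_scale[OF mu DCX])
    also have "\<dots> = (\<Sum>g\<in>S. ln (w g) * c g)"
      unfolding S_def using fin by (intro sum.mono_neutral_right) auto
    also have "\<dots> = - f vs"
    proof -
      have "ln (w g) * c g = - (c g * ln (vs g / c g))" if "g \<in> S" for g
        unfolding w_def using that cpos[OF that] vspos[OF that] by (simp add: ln_div algebra_simps)
      then show ?thesis unfolding f_def by (simp add: sum_negf[symmetric])
    qed
    finally have "\<mu> (\<lambda>x. \<Sum>g\<in>D. ln (w g) * g x) = - Tr" using fvs by simp
    moreover have "\<mu> (\<lambda>x. \<Sum>g\<in>D. ln (w g) * g x) \<le> \<mu> \<psi>" by (rule states_mono[OF mu lCX psi pt])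
    ultimately show ?thesis by simp
  qed
  have "eln N - ereal (\<mu> \<psi>) < ereal K"
  proof (cases "N > 0")
    case True
    have "ln N \<le> ln (1 + \<epsilon> * HS)" using True NB by simp
    also have "\<dots> < K - Tr" using eHS epos HS0
      by (metis add_pos_nonneg exp_less_cancel_iff exp_ln mult_nonneg_nonneg zero_less_one less_imp_le)
    finally have "ln N - \<mu> \<psi> < K" using mupsi by linarith
    then show ?thesis using True by (simp add: eln_pos)
  next
    case False then show ?thesis by (simp add: eln_def)
  qed
  then show ?thesis using psi unfolding N_def by blast
qed

end



context sys begin

lemma dual:
  assumes mu: "\<mu> \<in> states" and D: "partition_of_unity D" and K: "tau_nD A \<mu> n D < ereal K"
  shows "\<exists>\<psi>\<in>CX. eln (supnorm ((A^^n) (\<lambda>x. exp (\<psi> x)))) - ereal (\<mu> \<psi>) < ereal K"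
proof (cases "tau_nD A \<mu> n D")
  case (real Tr)
  then show ?thesis using K by (intro caseB[OF mu D real]) simp
next
  case PInf then show ?thesis using K by simp
next
  case MInf
  note fin = part_facts(1)[OF D] and DCX = part_facts(2)[OF D] and gnn = part_facts(3)[OF D]
  have "\<exists>g0\<in>D. \<mu> g0 > 0 \<and> (\<forall>x. (A^^n) g0 x = 0)"
  proof (rule ccontr)
    assume nex: "\<not> (\<exists>g0\<in>D. \<mu> g0 > 0 \<and> (\<forall>x. (A^^n) g0 x = 0))"
    have ex1: "\<exists>x. (A^^n) g x > 0" if g: "g \<in> D" "\<mu> g \<noteq> 0" for g
    proof -
      have "\<mu> g > 0" using states_pos[OF mu DCX[OF g(1)] gnn[OF g(1)]] g(2) by simp
      then have "\<not> (\<forall>x. (A^^n) g x = 0)" using nex g(1) by blast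
      then obtain x where "(A^^n) g x \<noteq> 0" by blast
      moreover have "(A^^n) g x \<ge> 0" using An_nonneg[OF DCX[OF g(1)] gnn[OF g(1)]] .
      ultimately show ?thesis by (intro exI[of _ x]) simp
    qed
    then have ex: "\<forall>g\<in>{g\<in>D. \<mu> g \<noteq> 0}. \<exists>x. (A^^n) g x > 0" by blast
    define S where "S = {g\<in>D. \<mu> g \<noteq> 0}"
    obtain xg where xg: "\<forall>g\<in>S. (A^^n) g (xg g) > 0" using ex unfolding S_def by metis
    have finS: "finite S" using fin unfolding S_def by simp
    have "sum \<mu> S = sum \<mu> D" using fin unfolding S_def by (intro sum.mono_neutral_left) auto
    then have "sum \<mu> S = 1" using mu_part_sum[OF mu D] by simp
    then have Sne: "S \<noteq> {}" by auto
    define m0 where "m0 = (\<lambda>f. (\<Sum>g'\<in>S. f (xg g')) / card S)"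
    have m0: "m0 \<in> states" unfolding m0_def by (rule avg_states[OF finS Sne])
    have m0pos: "m0 ((A^^n) g) > 0" if g: "g \<in> S" for g
    proof -
      have gD: "g \<in> D" using g unfolding S_def by simp
      have "0 < (A^^n) g (xg g)" using xg g by simp
      also have "\<dots> \<le> (\<Sum>g'\<in>S. (A^^n) g (xg g'))"
        using finS g An_nonneg[OF DCX[OF gD] gnn[OF gD]] by (intro member_le_sum) auto
      finally show ?thesis unfolding m0_def using finS Sne by (simp add: card_gt_0_iff)
    qed
    have "(\<Sum>g\<in>D. (if \<mu> g = 0 then 0 else ereal (\<mu> g) * eln (m0 ((A ^^ n) g) / \<mu> g))) \<noteq> -\<infinity>"
    proof -
      have cnn': "0 \<le> \<mu> g" if "g \<in> D" for g using states_pos[OF mu DCX[OF that] gnn[OF that]] .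
      have xnn: "0 \<le> m0 ((A^^n) g)" if "g \<in> D" for g
        using states_pos[OF m0 An_CX[OF DCX[OF that]] An_nonneg[OF DCX[OF that] gnn[OF that]]] .
      show ?thesis using tau_sum_value[OF fin cnn' xnn] m0pos unfolding S_def by auto
    qed
    moreover have "(\<Sum>g\<in>D. (if \<mu> g = 0 then 0 else ereal (\<mu> g) * eln (m0 ((A ^^ n) g) / \<mu> g))) \<le> tau_nD A \<mu> n D"
      unfolding tau_nD_def using m0 by (rule SUP_upper)
    ultimately show False using MInf by simp
  qed
  then obtain g0 where "g0 \<in> D" "\<mu> g0 > 0" "\<And>x. (A^^n) g0 x = 0" by blast
  then show ?thesis by (rule caseA[OF mu D])
qed

lemma lower:
  assumes mu: "\<mu> \<in> inv_states \<alpha>"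
  shows "(INF \<phi>\<in>CX. lam \<phi> - ereal (\<mu> \<phi>)) \<le> t_entropy A \<mu>"
  unfolding t_entropy_def
proof (rule INF_greatest)
  fix n :: nat assume n: "n \<in> {1..}"
  then have n1: "n \<ge> 1" by simp
  have ms: "\<mu> \<in> states" using mu by (simp add: inv_states_def)
  show "(INF \<phi>\<in>CX. lam \<phi> - ereal (\<mu> \<phi>)) \<le> tau_n A \<mu> n / ereal (real n)"
  proof (rule dense_ge)
    fix y assume y: "tau_n A \<mu> n / ereal (real n) < y"
    show "(INF \<phi>\<in>CX. lam \<phi> - ereal (\<mu> \<phi>)) \<le> y"
    proof (cases y)
      case PInf then show ?thesis by simp
    next
      case MInf then show ?thesis using y by simp
    next
      case (real Y)
      have "tau_n A \<mu> n < ereal Y * ereal (real n)"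
        using y real n1 by (subst ereal_divide_less_iff[symmetric]) auto
      then have "tau_n A \<mu> n < ereal (Y * n)" by simp
      then obtain D where D: "partition_of_unity D" "tau_nD A \<mu> n D < ereal (Y * n)"
        unfolding tau_n_def by (auto simp: INF_less_iff)
      obtain \<psi> where psi: "\<psi> \<in> CX" and less: "eln (supnorm ((A^^n) (\<lambda>x. exp (\<psi> x)))) - ereal (\<mu> \<psi>) < ereal (Y * n)"
        using dual[OF ms D] by blast
      define \<phi> where "\<phi> = (\<lambda>x. \<psi> x / real n)"
      have phi: "\<phi> \<in> CX" unfolding \<phi>_def using psi by auto
      have muphi: "\<mu> \<phi> = \<mu> \<psi> / real n"
        unfolding \<phi>_def using states_scale[OF ms psi, of "1 / real n"] by simp
      have lamle: "lam \<phi> \<le> eln (supnorm ((A^^n) (\<lambda>x. exp (\<psi> x)))) / ereal (real n)"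
        unfolding \<phi>_def by (rule lam_scaled[OF psi n1])
      have "lam \<phi> - ereal (\<mu> \<phi>) \<le> y"
      proof (cases "supnorm ((A^^n) (\<lambda>x. exp (\<psi> x))) > 0")
        case True
        define N where "N = supnorm ((A^^n) (\<lambda>x. exp (\<psi> x)))"
        have "ln N - \<mu> \<psi> < Y * n" using less True unfolding N_def[symmetric] by (simp add: eln_pos)
        then have lt: "ln N / n - \<mu> \<psi> / n < Y" using n1 by (simp add: field_simps)
        have "lam \<phi> \<le> ereal (ln N / n)" using lamle True n1 unfolding N_def[symmetric] by (simp add: eln_pos ereal_divide)
        then have "lam \<phi> - ereal (\<mu> \<phi>) \<le> ereal (ln N / n) - ereal (\<mu> \<phi>)" by (rule ereal_minus_mono) simp
        also have "\<dots> \<le> y" using lt real muphi by simp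
        finally show ?thesis .
      next
        case False
        then have "lam \<phi> = -\<infinity>" using lamle n1 by (simp add: eln_def)
        then show ?thesis by simp
      qed
      then show ?thesis using phi by (meson INF_lower2)
    qed
  qed
qed

end

theorem theorem1p9:
  fixes \<alpha> :: "'a::t2_space \<Rightarrow> 'a"
    and A :: "('a \<Rightarrow> real) \<Rightarrow> ('a \<Rightarrow> real)"
    and \<mu> :: "('a \<Rightarrow> real) \<Rightarrow> real"
  assumes "compact (UNIV :: 'a set)"
    and "continuous_on UNIV \<alpha>"
    and "transfer_operator \<alpha> A"
    and "\<mu> \<in> inv_states \<alpha>"
  shows "t_entropy A \<mu> = (INF \<phi>\<in>CX. spectral_potential A \<phi> - ereal (\<mu> \<phi>))"
proof -
  interpret sys \<alpha> A using assms(1-3) by unfold_locales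
  have eq: "(INF \<phi>\<in>CX. spectral_potential A \<phi> - ereal (\<mu> \<phi>)) = (INF \<phi>\<in>CX. lam \<phi> - ereal (\<mu> \<phi>))"
    by (intro INF_cong refl) (simp add: spectral_eq)
  have "t_entropy A \<mu> \<le> (INF \<phi>\<in>CX. lam \<phi> - ereal (\<mu> \<phi>))"
    by (rule INF_greatest) (rule upper[OF assms(4)])
  moreover have "(INF \<phi>\<in>CX. lam \<phi> - ereal (\<mu> \<phi>)) \<le> t_entropy A \<mu>"
    by (rule lower[OF assms(4)])
  ultimately show ?thesis unfolding eq by (rule antisym)
qed



end
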